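(* Let $V_0\in\mathcal{Z}^1$ and $w\in H^1(\mathbb{R};\mathbb{C})$. Then $V_0+w\in\mathcal{Z}^1$ and $$\mathcal{P}(V_0+w)=\mathcal{P}(V_0)+\frac12\int_\mathbb{R}\langle iw,w'\rangle+\int_\mathbb{R}\langle iw,V_0'\rangle.$$
   Context: $\mathcal{X}^1=\{w\in L^\infty(\mathbb{R};\mathbb{C}):\ w'\in L^2,\ 1-|w|^2\in L^2\}$; $\mathcal{Z}^1=\{v\in\mathcal{X}^1:\ \lim_{x\to\pm\infty}v(x)\text{ exist}\}$. $\langle a,b\rangle=\mathrm{Re}(a\bar b)$. For $v\in\mathcal{Z}^1$, $\mathcal{P}(v)=\lim_{R\to\infty}\frac12\int_{-R}^R\langle iv,v'\rangle$ (the limit exists). *)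

theory Defs
  imports "HOL-Analysis.Analysis"
begin

text \<open>Functions R -> C are represented by their (locally absolutely) continuous
  representative; g is a weak derivative of v if g is locally integrable and
  v(b) - v(a) = integral of g over [a,b].\<close>

definition has_weak_deriv :: "(real \<Rightarrow> complex) \<Rightarrow> (real \<Rightarrow> complex) \<Rightarrow> bool" where
  "has_weak_deriv v g \<longleftrightarrow>
     (\<forall>a b. set_integrable lborel {a..b} g) \<and>
     (\<forall>a b. a \<le> b \<longrightarrow> v b - v a = (LBINT x:{a..b}. g x))"

definition weak_deriv :: "(real \<Rightarrow> complex) \<Rightarrow> real \<Rightarrow> complex" where
  "weak_deriv v = (SOME g. has_weak_deriv v g)"

definition L2 :: "(real \<Rightarrow> complex) set" where
  "L2 = {f. f \<in> borel_measurable lborel \<and> integrable lborel (\<lambda>x. (cmod (f x))\<^sup>2)}"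

definition Linf :: "(real \<Rightarrow> complex) set" where
  "Linf = {f. f \<in> borel_measurable lborel \<and> (\<exists>C. AE x in lborel. cmod (f x) \<le> C)}"

definition cinner :: "complex \<Rightarrow> complex \<Rightarrow> real" where
  "cinner a b = Re (a * cnj b)"

definition X1 :: "(real \<Rightarrow> complex) set" where
  "X1 = {w. w \<in> Linf \<and> (\<exists>g. has_weak_deriv w g) \<and> weak_deriv w \<in> L2
             \<and> (\<lambda>x. complex_of_real (1 - (cmod (w x))\<^sup>2)) \<in> L2}"

definition Z1 :: "(real \<Rightarrow> complex) set" where
  "Z1 = {v. v \<in> X1 \<and> (\<exists>l. (v \<longlongrightarrow> l) at_top) \<and> (\<exists>l. (v \<longlongrightarrow> l) at_bot)}"

definition H1 :: "(real \<Rightarrow> complex) set" where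
  "H1 = {w. w \<in> L2 \<and> (\<exists>g. has_weak_deriv w g) \<and> weak_deriv w \<in> L2}"

definition momentum :: "(real \<Rightarrow> complex) \<Rightarrow> real" where
  "momentum v = Lim at_top
     (\<lambda>R. 1/2 * (LBINT x:{-R..R}. cinner (\<i> * v x) (weak_deriv v x)))"

end

theory Submission
  imports Defs
begin


definition WD :: "(real \<Rightarrow> complex) \<Rightarrow> (real \<Rightarrow> complex) \<Rightarrow> bool" where
  "WD v g \<longleftrightarrow> (\<forall>a b. g absolutely_integrable_on {a..b}) \<and>
     (\<forall>a b. a \<le> b \<longrightarrow> v b - v a = integral {a..b} g)"

lemma hwd_WD:
  assumes "has_weak_deriv v g" shows "WD v g"
  unfolding WD_def
proof safe
  fix a b :: real
  have si: "set_integrable lborel {a..b} g" using assms by (simp add: has_weak_deriv_def)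
  then have "g integrable_on {a..b}" by (rule set_borel_integral_eq_integral)
  moreover have "(\<lambda>x. norm (g x)) integrable_on {a..b}"
    using set_integrable_norm[OF si] by (rule set_borel_integral_eq_integral)
  ultimately show "g absolutely_integrable_on {a..b}"
    by (simp add: absolutely_integrable_on_def)
next
  fix a b :: real assume "a \<le> b"
  have si: "set_integrable lborel {a..b} g" using assms by (simp add: has_weak_deriv_def)
  show "v b - v a = integral {a..b} g"
    using assms \<open>a \<le> b\<close> set_borel_integral_eq_integral(2)[OF si]
    by (simp add: has_weak_deriv_def)
qed

lemma WD_int: "WD v g \<Longrightarrow> g absolutely_integrable_on {a..b}"
  by (simp add: WD_def)

lemma WD_intg: "WD v g \<Longrightarrow> g integrable_on {a..b}"
  by (simp add: WD_def absolutely_integrable_on_def)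

lemma WD_intn: "WD v g \<Longrightarrow> (\<lambda>x. norm (g x)) integrable_on {a..b}"
  by (simp add: WD_def absolutely_integrable_on_def)

lemma WD_eq: "WD v g \<Longrightarrow> a \<le> b \<Longrightarrow> v b - v a = integral {a..b} g"
  by (simp add: WD_def)

lemma WD_cont_on: assumes "WD v g" shows "continuous_on {a..b} v"
proof (cases "a \<le> b")
  case True
  have "continuous_on {a..b} (\<lambda>x. v a + integral {a..x} g)"
    by (intro continuous_intros indefinite_integral_continuous_1 WD_intg[OF assms])
  moreover have "\<And>x. x \<in> {a..b} \<Longrightarrow> v a + integral {a..x} g = v x"
    using WD_eq[OF assms] by (metis add_diff_cancel_left' add_diff_eq atLeastAtMost_iff diff_add_cancel)
  ultimately show ?thesis by (rule continuous_on_eq) blast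
next
  case False then show ?thesis by simp
qed

lemma WD_isCont: assumes "WD v g" shows "isCont v x"
proof -
  have "continuous_on {x-1..x+1} v" by (rule WD_cont_on[OF assms])
  moreover have "x \<in> interior {x-1..x+1}" by simp
  ultimately show ?thesis by (rule continuous_on_interior)
qed

lemma WD_cont: "WD v g \<Longrightarrow> continuous_on S v"
  by (intro continuous_at_imp_continuous_on ballI WD_isCont)

lemma WD_bound:
  assumes "WD v g" "x \<le> y"
  shows "norm (v y - v x) \<le> integral {x..y} (\<lambda>t. norm (g t))"
proof -
  have "norm (integral {x..y} g) \<le> integral {x..y} (\<lambda>t. norm (g t))"
    by (rule integral_norm_bound_integral[OF WD_intg[OF assms(1)] WD_intn[OF assms(1)]]) simp
  then show ?thesis using WD_eq[OF assms] by simp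
qed

lemma local_global:
  fixes E :: "real \<Rightarrow> 'a::real_normed_vector" and G :: "real \<Rightarrow> real"
  assumes ab: "a \<le> b"
    and H: "\<And>e. e > 0 \<Longrightarrow> \<exists>d>0. \<forall>x y. a \<le> x \<longrightarrow> x \<le> y \<longrightarrow> y \<le> b \<longrightarrow> y - x < d
              \<longrightarrow> norm (E y - E x) \<le> e * (G y - G x)"
  shows "E b = E a"
proof -
  have key: "norm (E b - E a) \<le> e * (G b - G a)" if e: "e > 0" for e
  proof -
    obtain d where d: "d > 0" and dH: "\<forall>x y. a \<le> x \<longrightarrow> x \<le> y \<longrightarrow> y \<le> b \<longrightarrow> y - x < d
              \<longrightarrow> norm (E y - E x) \<le> e * (G y - G x)" using H[OF e] by blast
    obtain n :: nat where n: "(b - a) / d < n" using reals_Archimedean2 by blast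
    have "0 \<le> (b - a) / d" using ab d by simp
    then have "0 < real n" using n by linarith
    then have npos: "n > 0" by simp
    define x where "x k = a + real k * (b - a) / n" for k
    have x0: "x 0 = a" and xn: "x n = b" using npos by (auto simp: x_def)
    have step: "x (Suc k) - x k = (b - a) / n" for k
      using npos by (simp add: x_def field_simps)
    have stepd: "(b - a) / n < d"
    proof -
      have "(b - a) < d * n" using n d by (simp add: field_simps)
      then show ?thesis using npos by (simp add: field_simps)
    qed
    have xmono: "x k \<le> x (Suc k)" for k
    proof -
      have "0 \<le> (b - a) / n" using ab by simp
      then show ?thesis using step[of k] by linarith
    qed
    have xa: "a \<le> x k" for k using ab npos by (simp add: x_def)
    have xb: "k < n \<Longrightarrow> x (Suc k) \<le> b" for k
    proof -
      assume "k < n"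
      then have "real (Suc k) \<le> real n" by simp
      then have "real (Suc k) * (b - a) / n \<le> real n * (b - a) / n"
        using ab npos by (intro divide_right_mono mult_right_mono) auto
      then show ?thesis using npos by (simp add: x_def)
    qed
    have "E b - E a = (\<Sum>k<n. E (x (Suc k)) - E (x k))"
      using sum_lessThan_telescope[of "\<lambda>k. E (x k)" n] x0 xn by simp
    then have "norm (E b - E a) \<le> (\<Sum>k<n. norm (E (x (Suc k)) - E (x k)))"
      by (simp add: norm_sum)
    also have "\<dots> \<le> (\<Sum>k<n. e * (G (x (Suc k)) - G (x k)))"
    proof (rule sum_mono)
      fix k assume "k \<in> {..<n}"
      then have kn: "k < n" by simp
      have "x (Suc k) - x k < d" using step[of k] stepd by simp
      then show "norm (E (x (Suc k)) - E (x k)) \<le> e * (G (x (Suc k)) - G (x k))"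
        using dH xa[of k] xb[OF kn] xmono[of k] by blast
    qed
    also have "\<dots> = e * (G b - G a)"
      using sum_lessThan_telescope[of "\<lambda>k. G (x k)" n] x0 xn by (simp add: sum_distrib_left[symmetric])
    finally show ?thesis .
  qed
  have M: "G b - G a \<ge> 0" using key[of 1] by (metis mult_1 norm_ge_zero order_trans zero_less_one)
  show ?thesis
  proof (rule ccontr)
    assume "E b \<noteq> E a"
    then have p: "norm (E b - E a) > 0" by simp
    define e where "e = norm (E b - E a) / (G b - G a + 1)"
    have e: "e > 0" using p M by (simp add: e_def)
    have "norm (E b - E a) \<le> e * (G b - G a)" by (rule key[OF e])
    also have "\<dots> < norm (E b - E a)"
      using p M by (simp add: e_def field_simps)
    finally show False by simp
  qed
qed



lemma cont_mult_absint:
  fixes h g :: "real \<Rightarrow> complex"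
  assumes h: "continuous_on {a..b} h" and g: "g absolutely_integrable_on {a..b}"
  shows "(\<lambda>t. h t * g t) absolutely_integrable_on {a..b}"
proof (rule absolutely_integrable_bounded_measurable_product[where h="(*)"])
  show "bilinear ((*) :: complex \<Rightarrow> complex \<Rightarrow> complex)"
    by (rule bilinear_times)
  show "h \<in> borel_measurable (lebesgue_on {a..b})"
    using h by (rule continuous_imp_measurable_on_sets_lebesgue) simp
  show "bounded (h ` {a..b})"
    using compact_continuous_image[OF h] compact_imp_bounded by blast
qed (use g in auto)

lemma lip_cont:
  fixes Phi :: "complex \<Rightarrow> complex"
  assumes Pl: "\<And>z y. z \<in> S \<Longrightarrow> y \<in> S \<Longrightarrow> norm (Phi z - Phi y) \<le> L * norm (z - y)"
    and L: "L \<ge> 0"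
  shows "continuous_on S Phi"
  unfolding continuous_on_iff
proof (intro ballI allI impI)
  fix x e assume x: "x \<in> S" and e: "(e::real) > 0"
  show "\<exists>d>0. \<forall>x'\<in>S. dist x' x < d \<longrightarrow> dist (Phi x') (Phi x) < e"
  proof (intro exI[of _ "e / (L + 1)"] conjI ballI impI)
    show "e / (L + 1) > 0" using e L by simp
    fix x' assume x': "x' \<in> S" and d: "dist x' x < e / (L + 1)"
    have "dist (Phi x') (Phi x) \<le> L * dist x' x" using Pl[OF x' x] by (simp add: dist_norm)
    also have "\<dots> \<le> L * (e / (L + 1))" by (rule mult_left_mono) (use d L in auto)
    also have "\<dots> < e" using e L by (simp add: field_simps)
    finally show "dist (Phi x') (Phi x) < e" .
  qed
qed

lemma chain:
  fixes F Phi :: "complex \<Rightarrow> complex"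
  assumes wd: "WD v g" and ab: "a \<le> b" and vS: "\<And>t. t \<in> {a..b} \<Longrightarrow> v t \<in> S"
    and Fe: "\<And>z y. z \<in> S \<Longrightarrow> y \<in> S \<Longrightarrow> norm (F z - F y - Phi y * (z - y)) \<le> C * (norm (z - y))^2"
    and Pl: "\<And>z y. z \<in> S \<Longrightarrow> y \<in> S \<Longrightarrow> norm (Phi z - Phi y) \<le> L * norm (z - y)"
    and C: "C \<ge> 0" and L: "L \<ge> 0"
  shows "(\<lambda>t. Phi (v t) * g t) absolutely_integrable_on {a..b}"
    and "F (v b) - F (v a) = integral {a..b} (\<lambda>t. Phi (v t) * g t)"
proof -
  define P where "P t = Phi (v t) * g t" for t
  have cPv: "continuous_on {a..b} (\<lambda>t. Phi (v t))"
    by (rule continuous_on_compose2[OF lip_cont[OF Pl L] WD_cont[OF wd]]) (use vS in auto)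
  show aP: "(\<lambda>t. Phi (v t) * g t) absolutely_integrable_on {a..b}"
    by (rule cont_mult_absint[OF cPv WD_int[OF wd]])
  have Peq: "P = (\<lambda>t. Phi (v t) * g t)" by (rule ext) (simp add: P_def)
  have iP: "P integrable_on {a..b}" using aP unfolding Peq absolutely_integrable_on_def by blast
  define ng where "ng = (\<lambda>t. norm (g t))"
  have ing: "ng integrable_on {x..y}" for x y using WD_intn[OF wd] by (simp add: ng_def)
  define G where "G t = integral {a..t} ng" for t
  define E where "E t = F (v t) - integral {a..t} P" for t
  have est: "norm (E y - E x) \<le> (C + L) * (G y - G x)^2"
    if xy: "a \<le> x" "x \<le> y" "y \<le> b" for x y
  proof -
    have iPy: "P integrable_on {a..y}" by (rule integrable_on_subinterval[OF iP]) (use xy in auto)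
    have iPxy: "P integrable_on {x..y}" by (rule integrable_on_subinterval[OF iP]) (use xy in auto)
    have Gd: "G y - G x = integral {x..y} ng"
      using Henstock_Kurzweil_Integration.integral_combine[OF xy(1,2) ing[of a y]] by (simp add: G_def)
    have Pd: "integral {a..y} P = integral {a..x} P + integral {x..y} P"
      using Henstock_Kurzweil_Integration.integral_combine[OF xy(1,2) iPy] by simp
    define D where "D = G y - G x"
    have D0: "D \<ge> 0" unfolding D_def Gd by (rule integral_nonneg[OF ing]) (simp add: ng_def)
    have vb: "norm (v t - v x) \<le> D" if t: "t \<in> {x..y}" for t
    proof -
      have "norm (v t - v x) \<le> integral {x..t} ng" using WD_bound[OF wd, of x t] t by (simp add: ng_def)
      also have "\<dots> \<le> integral {x..y} ng"
        by (rule integral_subset_le) (use t ing in \<open>auto simp: ng_def\<close>)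
      finally show ?thesis by (simp add: D_def Gd)
    qed
    have vyx: "v y - v x = integral {x..y} g" using WD_eq[OF wd xy(2)] .
    have t1: "norm (F (v y) - F (v x) - Phi (v x) * (v y - v x)) \<le> C * D^2"
    proof -
      have "norm (F (v y) - F (v x) - Phi (v x) * (v y - v x)) \<le> C * (norm (v y - v x))^2"
        by (rule Fe) (use vS xy in auto)
      also have "\<dots> \<le> C * D^2"
        using vb[of y] xy C by (intro mult_left_mono power_mono) auto
      finally show ?thesis .
    qed
    have ig: "g integrable_on {x..y}" by (rule WD_intg[OF wd])
    have iQ: "(\<lambda>t. (Phi (v x) - Phi (v t)) * g t) integrable_on {x..y}"
    proof -
      have "(\<lambda>t. Phi (v x) * g t) integrable_on {x..y}" using ig by (rule integrable_on_mult_right)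
      then have "(\<lambda>t. Phi (v x) * g t - P t) integrable_on {x..y}" using iPxy by (rule integrable_diff)
      then show ?thesis by (simp add: P_def algebra_simps)
    qed
    have t2eq: "Phi (v x) * (v y - v x) - integral {x..y} P = integral {x..y} (\<lambda>t. (Phi (v x) - Phi (v t)) * g t)"
    proof -
      have "integral {x..y} (\<lambda>t. (Phi (v x) - Phi (v t)) * g t) = integral {x..y} (\<lambda>t. Phi (v x) * g t - P t)"
        by (simp add: P_def algebra_simps)
      also have "\<dots> = integral {x..y} (\<lambda>t. Phi (v x) * g t) - integral {x..y} P"
        by (rule integral_diff[OF integrable_on_mult_right[OF ig] iPxy])
      also have "\<dots> = Phi (v x) * (v y - v x) - integral {x..y} P"
        by (simp add: vyx)
      finally show ?thesis by simp
    qed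
    have t2: "norm (integral {x..y} (\<lambda>t. (Phi (v x) - Phi (v t)) * g t)) \<le> L * D * D"
    proof -
      have "norm (integral {x..y} (\<lambda>t. (Phi (v x) - Phi (v t)) * g t)) \<le> integral {x..y} (\<lambda>t. (L * D) * ng t)"
      proof (rule integral_norm_bound_integral[OF iQ])
        show "(\<lambda>t. L * D * ng t) integrable_on {x..y}" using ing by (rule integrable_on_mult_right)
        fix t assume t: "t \<in> {x..y}"
        have "norm (Phi (v x) - Phi (v t)) \<le> L * norm (v x - v t)" by (rule Pl) (use vS xy t in auto)
        also have "\<dots> \<le> L * D" using vb[OF t] L by (simp add: mult_left_mono norm_minus_commute)
        finally have "norm (Phi (v x) - Phi (v t)) \<le> L * D" .
        then show "norm ((Phi (v x) - Phi (v t)) * g t) \<le> L * D * ng t"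
          by (simp add: ng_def norm_mult mult_right_mono)
      qed
      also have "\<dots> = L * D * D" by (simp add: Gd D_def)
      finally show ?thesis .
    qed
    have "E y - E x = (F (v y) - F (v x) - Phi (v x) * (v y - v x)) + (Phi (v x) * (v y - v x) - integral {x..y} P)"
      by (simp add: E_def Pd algebra_simps)
    then have "norm (E y - E x) \<le> C * D^2 + L * D * D"
      using norm_triangle_le[OF add_mono[OF t1 t2]] t2eq by simp
    then show ?thesis by (simp add: D_def power2_eq_square algebra_simps)
  qed
  have Gc: "continuous_on {a..b} G" unfolding G_def by (rule indefinite_integral_continuous_1[OF ing])
  have Guc: "uniformly_continuous_on {a..b} G" by (rule compact_uniformly_continuous[OF Gc]) simp
  have "E b = E a"
  proof (rule local_global[OF ab])
    fix e :: real assume e: "e > 0"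
    define e' where "e' = e / (C + L + 1)"
    have e': "e' > 0" using e C L by (simp add: e'_def)
    obtain d where d: "d > 0" and dG: "\<forall>x\<in>{a..b}. \<forall>x'\<in>{a..b}. dist x' x < d \<longrightarrow> dist (G x') (G x) < e'"
      using Guc e' unfolding uniformly_continuous_on_def by blast
    show "\<exists>d>0. \<forall>x y. a \<le> x \<longrightarrow> x \<le> y \<longrightarrow> y \<le> b \<longrightarrow> y - x < d \<longrightarrow> norm (E y - E x) \<le> e * (G y - G x)"
    proof (intro exI[of _ d] conjI allI impI d)
      fix x y assume xy: "a \<le> x" "x \<le> y" "y \<le> b" "y - x < d"
      have "dist y x < d" using xy by (simp add: dist_real_def)
      then have "dist (G y) (G x) < e'" using dG xy by auto
      then have Dl: "G y - G x < e'" by (simp add: dist_real_def)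
      have D0': "0 \<le> G y - G x"
      proof -
        have "G y - G x = integral {x..y} ng"
          using Henstock_Kurzweil_Integration.integral_combine[OF xy(1,2) ing[of a y]] by (simp add: G_def)
        also have "\<dots> \<ge> 0" by (rule integral_nonneg[OF ing]) (simp add: ng_def)
        finally show ?thesis by simp
      qed
      have "norm (E y - E x) \<le> (C + L) * (G y - G x)^2" by (rule est[OF xy(1-3)])
      also have "\<dots> = ((C + L) * (G y - G x)) * (G y - G x)" by (simp add: power2_eq_square)
      also have "\<dots> \<le> ((C + L) * e') * (G y - G x)"
        using Dl D0' C L by (intro mult_right_mono mult_left_mono) auto
      also have "\<dots> \<le> e * (G y - G x)"
      proof (rule mult_right_mono[OF _ D0'])
        have "(C + L) * e' = e * ((C + L) / (C + L + 1))" by (simp add: e'_def)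
        also have "\<dots> \<le> e * 1" using e C L by (intro mult_left_mono) auto
        finally show "(C + L) * e' \<le> e" by simp
      qed
      finally show "norm (E y - E x) \<le> e * (G y - G x)" .
    qed
  qed
  then have h: "F (v b) - integral {a..b} P = F (v a)" by (simp add: E_def)
  show "F (v b) - F (v a) = integral {a..b} (\<lambda>t. Phi (v t) * g t)"
    unfolding Peq[symmetric] by (simp add: h[symmetric])
qed



lemma WD_I:
  assumes "\<And>a b. a \<le> b \<Longrightarrow> g absolutely_integrable_on {a..b}"
    and "\<And>a b. a \<le> b \<Longrightarrow> v b - v a = integral {a..b} g"
  shows "WD v g"
  unfolding WD_def
proof (intro conjI allI impI)
  fix a b :: real
  show "g absolutely_integrable_on {a..b}"
  proof (cases "a \<le> b")
    case True then show ?thesis using assms(1) by blast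
  next
    case False then have "{a..b} = {}" by simp
    then show ?thesis by (simp add: absolutely_integrable_negligible)
  qed
qed (use assms in auto)

lemma WD_add:
  assumes "WD u g" "WD w h"
  shows "WD (\<lambda>x. u x + w x) (\<lambda>x. g x + h x)"
proof (rule WD_I)
  fix a b :: real assume ab: "a \<le> b"
  show "(\<lambda>x. g x + h x) absolutely_integrable_on {a..b}"
    using set_integral_add(1)[OF WD_int[OF assms(1)] WD_int[OF assms(2)]] by simp
  show "u b + w b - (u a + w a) = integral {a..b} (\<lambda>x. g x + h x)"
    using WD_eq[OF assms(1) ab] WD_eq[OF assms(2) ab]
      integral_add[OF WD_intg[OF assms(1)] WD_intg[OF assms(2)]] by (simp add: algebra_simps)
qed

lemma WD_cmul:
  assumes "WD u g"
  shows "WD (\<lambda>x. c * u x) (\<lambda>x. c * g x)"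
proof (rule WD_I)
  fix a b :: real assume ab: "a \<le> b"
  show "(\<lambda>x. c * g x) absolutely_integrable_on {a..b}"
    using WD_int[OF assms(1)] by (intro set_integrable_mult_right) auto
  show "c * u b - c * u a = integral {a..b} (\<lambda>x. c * g x)"
    using WD_eq[OF assms(1) ab] by (simp add: algebra_simps)
qed

lemma WD_diff:
  assumes "WD u g" "WD w h"
  shows "WD (\<lambda>x. u x - w x) (\<lambda>x. g x - h x)"
  using WD_add[OF assms(1) WD_cmul[OF assms(2), of "-1"]] by simp

lemma WD_cong:
  assumes "WD u g" "\<And>x. u x = u' x" "\<And>x. g x = g' x"
  shows "WD u' g'"
proof -
  have "u = u'" "g = g'" using assms(2,3) by auto
  then show ?thesis using assms(1) by simp
qed

lemma WD_cnj:
  assumes "WD u g"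
  shows "WD (\<lambda>x. cnj (u x)) (\<lambda>x. cnj (g x))"
proof (rule WD_I)
  fix a b :: real assume ab: "a \<le> b"
  show "(\<lambda>x. cnj (g x)) absolutely_integrable_on {a..b}"
    using absolutely_integrable_linear[OF WD_int[OF assms(1)] bounded_linear_cnj]
    by (simp add: o_def)
  have "integral {a..b} (cnj \<circ> g) = cnj (integral {a..b} g)"
    by (rule integral_linear[OF WD_intg[OF assms] bounded_linear_cnj])
  moreover have "cnj (u b) - cnj (u a) = cnj (u b - u a)" by simp
  ultimately show "cnj (u b) - cnj (u a) = integral {a..b} (\<lambda>x. cnj (g x))"
    using WD_eq[OF assms(1) ab] by (simp add: o_def)
qed

lemma WD_sq:
  assumes wd: "WD v g"
  shows "WD (\<lambda>x. (v x)^2) (\<lambda>x. 2 * v x * g x)"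
proof -
  have Fe: "norm (z^2 - y^2 - (2 * y) * (z - y)) \<le> 1 * (norm (z - y))^2" for z y :: complex
  proof -
    have "z^2 - y^2 - (2 * y) * (z - y) = (z - y)^2" by (simp add: power2_eq_square algebra_simps)
    then show ?thesis by (simp add: norm_power)
  qed
  have Pl: "norm (2 * z - 2 * y) \<le> 2 * norm (z - y)" for z y :: complex
  proof -
    have e: "2 * z - 2 * y = 2 * (z - y)" by (simp add: algebra_simps)
    show ?thesis unfolding e norm_mult by simp
  qed
  show ?thesis
  proof (rule WD_I)
    fix a b :: real assume ab: "a \<le> b"
    note c = chain[OF wd ab, of UNIV "\<lambda>z. z^2" "\<lambda>z. 2 * z" 1 2, OF _ Fe Pl]
    show "(\<lambda>x. 2 * v x * g x) absolutely_integrable_on {a..b}" using c(1) by simp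
    show "(v b)^2 - (v a)^2 = integral {a..b} (\<lambda>x. 2 * v x * g x)" using c(2) by simp
  qed
qed

lemma WD_mult:
  assumes u: "WD u g" and w: "WD w h"
  shows "WD (\<lambda>x. u x * w x) (\<lambda>x. u x * h x + g x * w x)"
proof -
  have A: "WD (\<lambda>x. (u x + w x)^2) (\<lambda>x. 2 * (u x + w x) * (g x + h x))"
    by (rule WD_sq[OF WD_add[OF u w]])
  have B: "WD (\<lambda>x. (u x - w x)^2) (\<lambda>x. 2 * (u x - w x) * (g x - h x))"
    by (rule WD_sq[OF WD_diff[OF u w]])
  have C: "WD (\<lambda>x. (1/4) * ((u x + w x)^2 - (u x - w x)^2))
              (\<lambda>x. (1/4) * (2 * (u x + w x) * (g x + h x) - 2 * (u x - w x) * (g x - h x)))"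
    by (rule WD_cmul[OF WD_diff[OF A B]])
  show ?thesis
    by (rule WD_cong[OF C]) (simp_all add: power2_eq_square algebra_simps)
qed



lemma imi:
  fixes f :: "real \<Rightarrow> real"
  assumes "integrable lborel f"
  shows "integrable lborel (\<lambda>x. f x * indicator {a..b} x)"
proof -
  have "integrable lborel (\<lambda>x. indicator {a..b} x *\<^sub>R f x)"
    by (rule integrable_mult_indicator) (simp_all add: assms)
  then show ?thesis by (simp add: mult.commute)
qed

lemma ae_zero_real:
  fixes d :: "real \<Rightarrow> real"
  assumes si: "\<And>a b. set_integrable lborel {a..b} d"
    and z: "\<And>a b. a \<le> b \<Longrightarrow> (LBINT x:{a..b}. d x) = 0"
  shows "AE x in lborel. d x = 0"
proof -
  have zz: "(LBINT x:{a..b}. d x) = 0" for a b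
  proof (cases "a \<le> b")
    case True then show ?thesis by (rule z)
  next
    case False then have "{a..b} = {}" by simp
    then show ?thesis by (simp add: set_lebesgue_integral_def)
  qed
  have n: "AE x in lborel. x \<in> {- real n..real n} \<longrightarrow> d x = 0" for n :: nat
  proof -
    define f where "f x = indicator {- real n..real n} x * d x" for x
    have fi: "integrable lborel f"
      using si[of "- real n" "real n"] unfolding set_integrable_def f_def by simp
    have fm[measurable]: "f \<in> borel_measurable lborel" using fi by (rule borel_measurable_integrable)
    define fp where "fp x = max 0 (f x)" for x
    define fn where "fn x = max 0 (- f x)" for x
    have fpi: "integrable lborel fp" unfolding fp_def using fi by (intro integrable_max) auto
    have fni: "integrable lborel fn" unfolding fn_def using fi by (intro integrable_max) auto
    have fpm[measurable]: "fp \<in> borel_measurable lborel" unfolding fp_def by measurable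
    have fnm[measurable]: "fn \<in> borel_measurable lborel" unfolding fn_def by measurable
    have intX: "(\<integral>x. fp x * indicator {a..b} x \<partial>lborel) = (\<integral>x. fn x * indicator {a..b} x \<partial>lborel)" for a b
    proof -
      have i1: "integrable lborel (\<lambda>x. fp x * indicator {a..b} x)"
        using fpi by (rule imi)
      have i2: "integrable lborel (\<lambda>x. fn x * indicator {a..b} x)"
        using fni by (rule imi)
      have "(\<integral>x. fp x * indicator {a..b} x \<partial>lborel) - (\<integral>x. fn x * indicator {a..b} x \<partial>lborel)
          = (\<integral>x. fp x * indicator {a..b} x - fn x * indicator {a..b} x \<partial>lborel)"
        using i1 i2 by simp
      also have "\<dots> = (\<integral>x. indicator {max a (- real n)..min b (real n)} x * d x \<partial>lborel)"
      proof (rule Bochner_Integration.integral_cong[OF refl])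
        fix x
        have "fp x - fn x = f x" by (simp add: fp_def fn_def)
        then show "fp x * indicator {a..b} x - fn x * indicator {a..b} x
            = indicator {max a (- real n)..min b (real n)} x * d x"
          by (auto simp: f_def indicator_def left_diff_distrib[symmetric])
      qed
      also have "\<dots> = (LBINT x:{max a (- real n)..min b (real n)}. d x)"
        by (simp add: set_lebesgue_integral_def)
      also have "\<dots> = 0" by (rule zz)
      finally show ?thesis by simp
    qed
    have dens: "density lborel (\<lambda>x. ennreal (fp x)) = density lborel (\<lambda>x. ennreal (fn x))"
    proof (rule measure_eqI_generator_eq[where E="range (\<lambda>(a, b). {a..b::real})" and \<Omega>=UNIV
          and A="\<lambda>i. {- real i..real i}"])
      show "Int_stable (range (\<lambda>(a, b). {a..b::real}))"
        unfolding Int_stable_def by (auto simp: Int_atLeastAtMost)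
      show "range (\<lambda>(a, b). {a..b::real}) \<subseteq> Pow UNIV" by simp
      have sg: "sigma_sets UNIV (range (\<lambda>(a, b). {a..b::real})) = sets borel"
        by (subst borel_eq_atLeastAtMost) (simp add: sets_measure_of)
      show "sets (density lborel (\<lambda>x. ennreal (fp x))) = sigma_sets UNIV (range (\<lambda>(a, b). {a..b::real}))"
        using sg by simp
      show "sets (density lborel (\<lambda>x. ennreal (fn x))) = sigma_sets UNIV (range (\<lambda>(a, b). {a..b::real}))"
        using sg by simp
      show "range (\<lambda>i. {- real i..real i}) \<subseteq> range (\<lambda>(a, b). {a..b::real})" by auto
      show "(\<Union>i. {- real i..real i}) = UNIV"
      proof safe
        fix x :: real
        obtain i :: nat where "\<bar>x\<bar> \<le> i" using real_arch_simple by blast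
        then have "x \<in> {- real i..real i}" by auto
        then show "x \<in> (\<Union>i. {- real i..real i})" by blast
      qed auto
      have em: "emeasure (density lborel (\<lambda>x. ennreal (fp x))) {a..b} = ennreal (\<integral>x. fp x * indicator {a..b} x \<partial>lborel)"
        "emeasure (density lborel (\<lambda>x. ennreal (fn x))) {a..b} = ennreal (\<integral>x. fn x * indicator {a..b} x \<partial>lborel)"
        for a b
      proof -
        have i1: "integrable lborel (\<lambda>x. fp x * indicator {a..b} x)"
          using fpi by (rule imi)
        have i2: "integrable lborel (\<lambda>x. fn x * indicator {a..b} x)"
          using fni by (rule imi)
        have "emeasure (density lborel (\<lambda>x. ennreal (fp x))) {a..b} = (\<integral>\<^sup>+ x. ennreal (fp x * indicator {a..b} x) \<partial>lborel)"
          by (subst emeasure_density) (auto intro!: nn_integral_cong simp: indicator_def)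
        also have "\<dots> = ennreal (\<integral>x. fp x * indicator {a..b} x \<partial>lborel)"
          by (rule nn_integral_eq_integral[OF i1]) (simp add: fp_def)
        finally show "emeasure (density lborel (\<lambda>x. ennreal (fp x))) {a..b} = ennreal (\<integral>x. fp x * indicator {a..b} x \<partial>lborel)" .
        have "emeasure (density lborel (\<lambda>x. ennreal (fn x))) {a..b} = (\<integral>\<^sup>+ x. ennreal (fn x * indicator {a..b} x) \<partial>lborel)"
          by (subst emeasure_density) (auto intro!: nn_integral_cong simp: indicator_def)
        also have "\<dots> = ennreal (\<integral>x. fn x * indicator {a..b} x \<partial>lborel)"
          by (rule nn_integral_eq_integral[OF i2]) (simp add: fn_def)
        finally show "emeasure (density lborel (\<lambda>x. ennreal (fn x))) {a..b} = ennreal (\<integral>x. fn x * indicator {a..b} x \<partial>lborel)" .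
      qed
      show "X \<in> range (\<lambda>(a, b). {a..b::real}) \<Longrightarrow>
         emeasure (density lborel (\<lambda>x. ennreal (fp x))) X = emeasure (density lborel (\<lambda>x. ennreal (fn x))) X" for X
        using em intX by auto
      show "emeasure (density lborel (\<lambda>x. ennreal (fp x))) {- real i..real i} \<noteq> \<infinity>" for i
        using em(1) by simp
    qed
    have "AE x in lborel. ennreal (fp x) = ennreal (fn x)"
      by (rule sigma_finite_measure.density_unique[OF sigma_finite_lborel _ _ dens]) auto
    then show ?thesis
    proof (rule AE_mp, intro AE_I2 impI)
      fix x assume e: "ennreal (fp x) = ennreal (fn x)" and x: "x \<in> {- real n..real n}"
      have "fp x = fn x" using e by (simp add: fp_def fn_def)
      then have "f x = 0" by (simp add: fp_def fn_def split: if_splits)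
      then show "d x = 0" using x by (simp add: f_def)
    qed
  qed
  then have "AE x in lborel. \<forall>n::nat. x \<in> {- real n..real n} \<longrightarrow> d x = 0"
    unfolding AE_all_countable using n by blast
  then show ?thesis
  proof (rule AE_mp, intro AE_I2 impI)
    fix x :: real assume h: "\<forall>n::nat. x \<in> {- real n..real n} \<longrightarrow> d x = 0"
    obtain i :: nat where "\<bar>x\<bar> \<le> i" using real_arch_simple by blast
    then have "x \<in> {- real i..real i}" by auto
    then show "d x = 0" using h by blast
  qed
qed



lemma set_Re:
  fixes f :: "real \<Rightarrow> complex"
  assumes "set_integrable lborel A f"
  shows "set_integrable lborel A (\<lambda>x. Re (f x))" "(LBINT x:A. Re (f x)) = Re (LBINT x:A. f x)"
proof -
  have i: "integrable lborel (\<lambda>x. indicator A x *\<^sub>R f x)" using assms by (simp add: set_integrable_def)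
  have e: "(\<lambda>x. Re (indicator A x *\<^sub>R f x)) = (\<lambda>x. indicator A x *\<^sub>R Re (f x))" by (rule ext) simp
  show "set_integrable lborel A (\<lambda>x. Re (f x))"
    using integrable_Re[OF i] unfolding set_integrable_def e .
  show "(LBINT x:A. Re (f x)) = Re (LBINT x:A. f x)"
    using integral_Re[OF i] unfolding set_lebesgue_integral_def e .
qed

lemma set_Im:
  fixes f :: "real \<Rightarrow> complex"
  assumes "set_integrable lborel A f"
  shows "set_integrable lborel A (\<lambda>x. Im (f x))" "(LBINT x:A. Im (f x)) = Im (LBINT x:A. f x)"
proof -
  have i: "integrable lborel (\<lambda>x. indicator A x *\<^sub>R f x)" using assms by (simp add: set_integrable_def)
  have e: "(\<lambda>x. Im (indicator A x *\<^sub>R f x)) = (\<lambda>x. indicator A x *\<^sub>R Im (f x))" by (rule ext) simp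
  show "set_integrable lborel A (\<lambda>x. Im (f x))"
    using integrable_Im[OF i] unfolding set_integrable_def e .
  show "(LBINT x:A. Im (f x)) = Im (LBINT x:A. f x)"
    using integral_Im[OF i] unfolding set_lebesgue_integral_def e .
qed

lemma hwd_unique:
  assumes h1: "has_weak_deriv v g1" and h2: "has_weak_deriv v g2"
  shows "AE x in lborel. g1 x = g2 x"
proof -
  define d where "d x = g1 x - g2 x" for x
  have si: "set_integrable lborel {a..b} d" for a b
    using h1 h2 unfolding has_weak_deriv_def d_def by (intro set_integral_diff(1)) auto
  have z: "(LBINT x:{a..b}. d x) = 0" if "a \<le> b" for a b
  proof -
    have "(LBINT x:{a..b}. d x) = (LBINT x:{a..b}. g1 x) - (LBINT x:{a..b}. g2 x)"
      unfolding d_def using h1 h2 unfolding has_weak_deriv_def by (intro set_integral_diff(2)) auto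
    also have "\<dots> = 0" using h1 h2 that unfolding has_weak_deriv_def by (metis diff_self)
    finally show ?thesis .
  qed
  have "AE x in lborel. Re (d x) = 0"
    by (rule ae_zero_real) (use set_Re[OF si] z in auto)
  moreover have "AE x in lborel. Im (d x) = 0"
    by (rule ae_zero_real) (use set_Im[OF si] z in auto)
  ultimately show ?thesis
  proof (eventually_elim)
    case (elim x)
    then have "d x = 0" by (simp add: complex_eq_iff)
    then show ?case by (simp add: d_def)
  qed
qed

lemma hwd_meas:
  assumes "has_weak_deriv v g"
  shows "g \<in> borel_measurable lborel"
proof (rule borel_measurable_LIMSEQ_metric)
  fix i :: nat
  have "integrable lborel (\<lambda>x. indicator {- real i..real i} x *\<^sub>R g x)"
    using assms unfolding has_weak_deriv_def set_integrable_def by blast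
  then show "(\<lambda>x. indicator {- real i..real i} x *\<^sub>R g x) \<in> borel_measurable lborel"
    by (rule borel_measurable_integrable)
next
  fix x :: real
  obtain N :: nat where N: "\<bar>x\<bar> \<le> N" using real_arch_simple by blast
  have "eventually (\<lambda>i. indicator {- real i..real i} x *\<^sub>R g x = g x) sequentially"
  proof (rule eventually_sequentiallyI[of N])
    fix i assume "N \<le> i"
    then have "real N \<le> real i" by simp
    then have "x \<in> {- real i..real i}" using N by auto
    then show "indicator {- real i..real i} x *\<^sub>R g x = g x" by simp
  qed
  then show "(\<lambda>i. indicator {- real i..real i} x *\<^sub>R g x) \<longlonglongrightarrow> g x"
    by (rule tendsto_eventually)
qed



lemma absint_lborel:
  fixes f :: "real \<Rightarrow> 'b::euclidean_space"
  assumes m: "f \<in> borel_measurable lborel" and S: "S \<in> sets borel"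
    and ai: "f absolutely_integrable_on S"
  shows "set_integrable lborel S f"
proof -
  have m2: "(\<lambda>x. indicator S x *\<^sub>R f x) \<in> borel_measurable lborel" using m S by measurable
  have "integrable lebesgue (\<lambda>x. indicator S x *\<^sub>R f x)" using ai by (simp add: set_integrable_def)
  then show ?thesis unfolding set_integrable_def using integrable_completion[OF m2] by simp
qed

lemma lbint_tendsto_full:
  fixes f :: "real \<Rightarrow> 'a::{banach, second_countable_topology}"
  assumes int: "integrable lborel f"
  shows "((\<lambda>R. LBINT x:{-R..R}. f x) \<longlongrightarrow> (LINT x|lborel. f x)) at_top"
proof (rule tendsto_at_topI_sequentially)
  fix X :: "nat \<Rightarrow> real" assume X: "filterlim X at_top sequentially"
  show "(\<lambda>n. LBINT x:{- X n..X n}. f x) \<longlonglongrightarrow> (LINT x|lborel. f x)"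
    unfolding set_lebesgue_integral_def
  proof (rule integral_dominated_convergence[where w="\<lambda>x. norm (f x)"])
    show "integrable lborel (\<lambda>x. norm (f x))" using int by simp
    show "f \<in> borel_measurable lborel" using int by (rule borel_measurable_integrable)
    have fm[measurable]: "f \<in> borel_measurable lborel" using int by (rule borel_measurable_integrable)
    show "(\<lambda>x. indicat_real {- X n..X n} x *\<^sub>R f x) \<in> borel_measurable lborel" for n
      by measurable
    show "AE x in lborel. norm (indicator {- X n..X n} x *\<^sub>R f x) \<le> norm (f x)" for n
      by (auto split: split_indicator)
    show "AE x in lborel. (\<lambda>n. indicator {- X n..X n} x *\<^sub>R f x) \<longlonglongrightarrow> f x"
    proof (rule AE_I2)
      fix x :: real
      have "eventually (\<lambda>n. \<bar>x\<bar> \<le> X n) sequentially"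
        using X unfolding filterlim_at_top by auto
      then have "eventually (\<lambda>n. indicator {- X n..X n} x *\<^sub>R f x = f x) sequentially"
        by eventually_elim (auto simp: indicator_def)
      then show "(\<lambda>n. indicator {- X n..X n} x *\<^sub>R f x) \<longlonglongrightarrow> f x"
        by (rule tendsto_eventually)
    qed
  qed
qed

lemma l2_prod_int:
  fixes f g :: "real \<Rightarrow> complex" and q :: "real \<Rightarrow> real"
  assumes "f \<in> L2" "g \<in> L2" and qm: "q \<in> borel_measurable lborel"
    and qb: "\<And>x. \<bar>q x\<bar> \<le> C * (norm (f x) * norm (g x))"
  shows "integrable lborel q"
proof -
  have fm: "f \<in> borel_measurable lborel" and fi: "integrable lborel (\<lambda>x. (norm (f x))\<^sup>2)"
    using assms(1) by (auto simp: L2_def)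
  have gm: "g \<in> borel_measurable lborel" and gi: "integrable lborel (\<lambda>x. (norm (g x))\<^sup>2)"
    using assms(2) by (auto simp: L2_def)
  have "integrable lborel (\<lambda>x. \<bar>C\<bar> * ((norm (f x))\<^sup>2 + (norm (g x))\<^sup>2))"
    using fi gi by auto
  then show ?thesis
  proof (rule Bochner_Integration.integrable_bound)
    show "q \<in> borel_measurable lborel" by (rule qm)
    show "AE x in lborel. norm (q x) \<le> norm (\<bar>C\<bar> * ((norm (f x))\<^sup>2 + (norm (g x))\<^sup>2))"
    proof (rule AE_I2)
      fix x
      have a: "norm (f x) * norm (g x) \<le> (norm (f x))\<^sup>2 + (norm (g x))\<^sup>2"
        by (smt (verit) norm_ge_zero power2_eq_square mult_mono sum_squares_bound)
      have "\<bar>q x\<bar> \<le> C * (norm (f x) * norm (g x))" by (rule qb)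
      also have "\<dots> \<le> \<bar>C\<bar> * (norm (f x) * norm (g x))" by (simp add: mult_right_mono)
      also have "\<dots> \<le> \<bar>C\<bar> * ((norm (f x))\<^sup>2 + (norm (g x))\<^sup>2)" using a by (simp add: mult_left_mono)
      finally show "norm (q x) \<le> norm (\<bar>C\<bar> * ((norm (f x))\<^sup>2 + (norm (g x))\<^sup>2))" by simp
    qed
  qed
qed

lemma lim_zero_top:
  fixes h :: "real \<Rightarrow> real"
  assumes hi: "integrable lborel h" and h0: "\<And>x. h x \<ge> 0" and lim: "(h \<longlongrightarrow> c) at_top"
  shows "c = 0"
proof -
  have c0: "c \<ge> 0" by (rule tendsto_lowerbound[OF lim]) (use h0 in auto)
  show ?thesis
  proof (rule ccontr)
    assume "c \<noteq> 0" then have cp: "c > 0" using c0 by simp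
    have "eventually (\<lambda>x. h x > c / 2) at_top"
      using order_tendstoD(1)[OF lim, of "c/2"] cp by simp
    then obtain N where N: "\<And>x. x \<ge> N \<Longrightarrow> h x > c / 2" by (auto simp: eventually_at_top_linorder)
    define M where "M = 2 * (LINT x|lborel. h x) / c + 1"
    have M0: "M > 0"
    proof -
      have "(LINT x|lborel. h x) \<ge> 0" using h0 by simp
      then have "0 \<le> 2 * (LINT x|lborel. h x) / c" using cp by simp
      then show ?thesis by (simp add: M_def)
    qed
    have "(LINT x|lborel. (c/2) * indicator {N..N+M} x) \<le> (LINT x|lborel. h x)"
    proof (rule integral_mono)
      show "integrable lborel (\<lambda>x. (c/2) * indicator {N..N+M} x)" using M0 by (intro integrable_mult_right integrable_real_indicator) (auto simp: emeasure_lborel_Icc)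
      show "integrable lborel h" by (rule hi)
      fix x show "(c/2) * indicator {N..N+M} x \<le> h x"
        using N[of x] h0[of x] cp by (auto simp: indicator_def)
    qed
    moreover have "(LINT x|lborel. (c/2) * indicator {N..N+M} x) = (c/2) * M"
      using M0 by simp
    ultimately have "(c/2) * M \<le> (LINT x|lborel. h x)" by linarith
    moreover have "(c/2) * M = (LINT x|lborel. h x) + c/2" using cp by (simp add: M_def field_simps)
    ultimately show False using cp by simp
  qed
qed

lemma lim_zero_bot:
  fixes h :: "real \<Rightarrow> real"
  assumes hi: "integrable lborel h" and h0: "\<And>x. h x \<ge> 0" and lim: "(h \<longlongrightarrow> c) at_bot"
  shows "c = 0"
proof -
  have c0: "c \<ge> 0" by (rule tendsto_lowerbound[OF lim]) (use h0 in auto)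
  show ?thesis
  proof (rule ccontr)
    assume "c \<noteq> 0" then have cp: "c > 0" using c0 by simp
    have "eventually (\<lambda>x. h x > c / 2) at_bot"
      using order_tendstoD(1)[OF lim, of "c/2"] cp by simp
    then obtain N where N: "\<And>x. x \<le> N \<Longrightarrow> h x > c / 2" by (auto simp: eventually_at_bot_linorder)
    define M where "M = 2 * (LINT x|lborel. h x) / c + 1"
    have M0: "M > 0"
    proof -
      have "(LINT x|lborel. h x) \<ge> 0" using h0 by simp
      then have "0 \<le> 2 * (LINT x|lborel. h x) / c" using cp by simp
      then show ?thesis by (simp add: M_def)
    qed
    have "(LINT x|lborel. (c/2) * indicator {N-M..N} x) \<le> (LINT x|lborel. h x)"
    proof (rule integral_mono)
      show "integrable lborel (\<lambda>x. (c/2) * indicator {N-M..N} x)" using M0 by (intro integrable_mult_right integrable_real_indicator) (auto simp: emeasure_lborel_Icc)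
      show "integrable lborel h" by (rule hi)
      fix x show "(c/2) * indicator {N-M..N} x \<le> h x"
        using N[of x] h0[of x] cp by (auto simp: indicator_def)
    qed
    moreover have "(LINT x|lborel. (c/2) * indicator {N-M..N} x) = (c/2) * M"
      using M0 by simp
    ultimately have "(c/2) * M \<le> (LINT x|lborel. h x)" by linarith
    moreover have "(c/2) * M = (LINT x|lborel. h x) + c/2" using cp by (simp add: M_def field_simps)
    ultimately show False using cp by simp
  qed
qed



lemma int_set: "integrable lborel (f :: real \<Rightarrow> 'a::{banach, second_countable_topology}) \<Longrightarrow> A \<in> sets borel \<Longrightarrow> set_integrable lborel A f"
  unfolding set_integrable_def by (rule integrable_mult_indicator) auto

lemma setint_le:
  fixes q :: "real \<Rightarrow> real"
  assumes qi: "integrable lborel q" and A: "A \<in> sets borel"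
  shows "\<bar>LBINT x:A. q x\<bar> \<le> (LINT x|lborel. \<bar>q x\<bar>)"
proof -
  have "\<bar>LBINT x:A. q x\<bar> \<le> (LBINT x:A. norm (q x))"
    using set_integral_norm_bound[OF int_set[OF qi A]] by simp
  also have "\<dots> = (LINT x|lborel. indicator A x * \<bar>q x\<bar>)" by (simp add: set_lebesgue_integral_def)
  also have "\<dots> \<le> (LINT x|lborel. \<bar>q x\<bar>)"
  proof (rule integral_mono)
    show "integrable lborel (\<lambda>x. indicator A x * \<bar>q x\<bar>)"
      using int_set[OF integrable_abs[OF qi] A] by (simp add: set_integrable_def)
    show "integrable lborel (\<lambda>x. \<bar>q x\<bar>)" using qi by simp
  qed (auto simp: indicator_def)
  finally show ?thesis .
qed

lemma re_norm_sq: "Re (z * cnj z) = (norm z)^2"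
  by (simp add: cmod_power2 power2_eq_square[of "Re z"] power2_eq_square[of "Im z"])

lemma wd_weak_deriv: assumes "has_weak_deriv v g" shows "has_weak_deriv v (weak_deriv v)"
  unfolding weak_deriv_def by (rule someI[of "has_weak_deriv v", OF assms])

lemma borel_cnj[measurable]:
  fixes f :: "'a \<Rightarrow> complex"
  shows "f \<in> borel_measurable M \<Longrightarrow> (\<lambda>x. cnj (f x)) \<in> borel_measurable M"
  using borel_measurable_complex_iff[of "\<lambda>x. cnj (f x)" M] borel_measurable_complex_iff[of f M] by auto

lemma H1_facts:
  assumes wH: "w \<in> H1"
  shows "\<exists>B. \<forall>x. norm (w x) \<le> B" "(w \<longlongrightarrow> 0) at_top" "(w \<longlongrightarrow> 0) at_bot"
proof -
  define h where "h = weak_deriv w"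
  obtain g0 where "has_weak_deriv w g0" using wH by (auto simp: H1_def)
  then have hw: "has_weak_deriv w h" unfolding h_def by (rule wd_weak_deriv)
  have wd: "WD w h" by (rule hwd_WD[OF hw])
  have hL2: "h \<in> L2" and wL2: "w \<in> L2" using wH by (auto simp: H1_def h_def)
  have wm[measurable]: "w \<in> borel_measurable lborel" using wL2 by (simp add: L2_def)
  have hm[measurable]: "h \<in> borel_measurable lborel" using hL2 by (simp add: L2_def)
  have wi: "integrable lborel (\<lambda>x. (norm (w x))^2)" using wL2 by (simp add: L2_def)
  define q where "q x = 2 * Re (w x * cnj (h x))" for x
  have qm[measurable]: "q \<in> borel_measurable lborel" unfolding q_def by measurable
  have qi: "integrable lborel q"
  proof (rule l2_prod_int[OF wL2 hL2 qm, of 2])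
    fix x
    have "\<bar>Re (w x * cnj (h x))\<bar> \<le> norm (w x * cnj (h x))" by (rule abs_Re_le_cmod)
    then show "\<bar>q x\<bar> \<le> 2 * (norm (w x) * norm (h x))" by (simp add: q_def norm_mult)
  qed
  have wd2: "WD (\<lambda>x. w x * cnj (w x)) (\<lambda>x. w x * cnj (h x) + h x * cnj (w x))"
    by (rule WD_mult[OF wd WD_cnj[OF wd]])
  have key: "(norm (w b))^2 - (norm (w a))^2 = (LBINT x:{a..b}. q x)" if ab: "a \<le> b" for a b
  proof -
    have "w b * cnj (w b) - w a * cnj (w a) = integral {a..b} (\<lambda>x. w x * cnj (h x) + h x * cnj (w x))"
      by (rule WD_eq[OF wd2 ab])
    then have "Re (w b * cnj (w b) - w a * cnj (w a)) = Re (integral {a..b} (\<lambda>x. w x * cnj (h x) + h x * cnj (w x)))"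
      by simp
    also have "\<dots> = integral {a..b} (Re \<circ> (\<lambda>x. w x * cnj (h x) + h x * cnj (w x)))"
      by (rule integral_linear[OF WD_intg[OF wd2] bounded_linear_Re, symmetric])
    also have "\<dots> = integral {a..b} q"
      by (rule integral_cong) (simp add: q_def algebra_simps)
    also have "\<dots> = (LBINT x:{a..b}. q x)"
      by (rule set_borel_integral_eq_integral(2)[symmetric]) (rule int_set[OF qi], simp)
    moreover have "Re (w b * cnj (w b) - w a * cnj (w a)) = (norm (w b))^2 - (norm (w a))^2"
      by (metis minus_complex.sel(1) re_norm_sq)
    ultimately show ?thesis by simp
  qed
  define Iq where "Iq = (LINT x|lborel. \<bar>q x\<bar>)"
  have bsq: "(norm (w x))^2 \<le> (norm (w 0))^2 + Iq" for x
  proof (cases "x \<ge> 0")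
    case True
    have "(norm (w x))^2 = (norm (w 0))^2 + (LBINT t:{0..x}. q t)" using key[OF True] by simp
    also have "\<dots> \<le> (norm (w 0))^2 + Iq" using setint_le[OF qi, of "{0..x}"] by (simp add: Iq_def)
    finally show ?thesis .
  next
    case False
    then have x0: "x \<le> 0" by simp
    have "(norm (w x))^2 = (norm (w 0))^2 - (LBINT t:{x..0}. q t)" using key[OF x0] by simp
    also have "\<dots> \<le> (norm (w 0))^2 + Iq" using setint_le[OF qi, of "{x..0}"] by (simp add: Iq_def)
    finally show ?thesis .
  qed
  show "\<exists>B. \<forall>x. norm (w x) \<le> B"
  proof (intro exI allI)
    fix x
    have "norm (w x) \<le> 1 + (norm (w x))^2"
    proof (cases "norm (w x) \<le> 1")
      case True then show ?thesis by (smt (verit) zero_le_power2)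
    next
      case False
      then have "norm (w x) * 1 \<le> norm (w x) * norm (w x)" by (intro mult_left_mono) auto
      then show ?thesis by (simp add: power2_eq_square)
    qed
    then show "norm (w x) \<le> 1 + ((norm (w 0))^2 + Iq)" using bsq[of x] by simp
  qed
  have sqlim: "((\<lambda>x. norm (w x)) \<longlongrightarrow> 0) F" if "((\<lambda>x. (norm (w x))^2) \<longlongrightarrow> 0) F" for F
  proof -
    have "((\<lambda>x. sqrt ((norm (w x))^2)) \<longlongrightarrow> sqrt 0) F" using that by (rule tendsto_real_sqrt)
    then show ?thesis by simp
  qed
  have tq: "((\<lambda>b. LBINT x:{0..b}. q x) \<longlongrightarrow> (LBINT x:{0..}. q x)) at_top"
    by (rule tendsto_set_lebesgue_integral_at_top) (auto intro: int_set[OF qi])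
  have "((\<lambda>b. (norm (w 0))^2 + (LBINT x:{0..b}. q x)) \<longlongrightarrow> (norm (w 0))^2 + (LBINT x:{0..}. q x)) at_top"
    by (intro tendsto_intros tq)
  moreover have "eventually (\<lambda>b. (norm (w 0))^2 + (LBINT x:{0..b}. q x) = (norm (w b))^2) at_top"
    unfolding eventually_at_top_linorder
  proof (intro exI[of _ 0] allI impI)
    fix n :: real assume n: "0 \<le> n"
    show "(norm (w 0))^2 + (LBINT x:{0..n}. q x) = (norm (w n))^2" using key[OF n] by linarith
  qed
  ultimately have l1: "((\<lambda>b. (norm (w b))^2) \<longlongrightarrow> (norm (w 0))^2 + (LBINT x:{0..}. q x)) at_top"
    by (rule Lim_transform_eventually)
  have "(norm (w 0))^2 + (LBINT x:{0..}. q x) = 0"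
    by (rule lim_zero_top[OF wi _ l1]) simp
  then have "((\<lambda>b. (norm (w b))^2) \<longlongrightarrow> 0) at_top" using l1 by simp
  then have "((\<lambda>b. norm (w b)) \<longlongrightarrow> 0) at_top" by (rule sqlim)
  then show "(w \<longlongrightarrow> 0) at_top" unfolding tendsto_norm_zero_iff .
  have tq': "((\<lambda>b. LBINT x:{b..0}. q x) \<longlongrightarrow> (LBINT x:{..0}. q x)) at_bot"
    by (rule tendsto_set_lebesgue_integral_at_bot) (auto intro: int_set[OF qi])
  have "((\<lambda>b. (norm (w 0))^2 - (LBINT x:{b..0}. q x)) \<longlongrightarrow> (norm (w 0))^2 - (LBINT x:{..0}. q x)) at_bot"
    by (intro tendsto_intros tq')
  moreover have "eventually (\<lambda>b. (norm (w 0))^2 - (LBINT x:{b..0}. q x) = (norm (w b))^2) at_bot"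
    unfolding eventually_at_bot_linorder
  proof (intro exI[of _ 0] allI impI)
    fix n :: real assume n: "n \<le> 0"
    show "(norm (w 0))^2 - (LBINT x:{n..0}. q x) = (norm (w n))^2" using key[OF n] by linarith
  qed
  ultimately have l2: "((\<lambda>b. (norm (w b))^2) \<longlongrightarrow> (norm (w 0))^2 - (LBINT x:{..0}. q x)) at_bot"
    by (rule Lim_transform_eventually)
  have "(norm (w 0))^2 - (LBINT x:{..0}. q x) = 0"
    by (rule lim_zero_bot[OF wi _ l2]) simp
  then have "((\<lambda>b. (norm (w b))^2) \<longlongrightarrow> 0) at_bot" using l2 by simp
  then have "((\<lambda>b. norm (w b)) \<longlongrightarrow> 0) at_bot" by (rule sqlim)
  then show "(w \<longlongrightarrow> 0) at_bot" unfolding tendsto_norm_zero_iff .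
qed



lemma ball_half_norm: "z \<in> ball (1::complex) (1/2) \<Longrightarrow> norm z \<ge> 1/2"
proof -
  assume "z \<in> ball (1::complex) (1/2)"
  then have "norm (1 - z) < 1/2" by (simp add: dist_norm)
  moreover have "norm (1::complex) \<le> norm (1 - z) + norm z" using norm_triangle_ineq[of "1 - z" z] by simp
  ultimately show ?thesis by simp
qed

lemma ball_half_Re: "z \<in> ball (1::complex) (1/2) \<Longrightarrow> Re z > 0"
proof -
  assume "z \<in> ball (1::complex) (1/2)"
  then have "norm (1 - z) < 1/2" by (simp add: dist_norm)
  moreover have "\<bar>Re (1 - z)\<bar> \<le> norm (1 - z)" by (rule abs_Re_le_cmod)
  ultimately show ?thesis by simp
qed

lemma inv_lip:
  assumes "z \<in> ball (1::complex) (1/2)" "y \<in> ball (1::complex) (1/2)"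
  shows "norm (inverse z - inverse y) \<le> 4 * norm (z - y)"
proof -
  have nz: "norm z \<ge> 1/2" and ny: "norm y \<ge> 1/2" using assms ball_half_norm by auto
  then have z0: "z \<noteq> 0" and y0: "y \<noteq> 0" by auto
  have "inverse z - inverse y = (y - z) / (z * y)" using z0 y0 by (simp add: field_simps)
  then have "norm (inverse z - inverse y) = norm (z - y) / (norm z * norm y)"
    by (simp add: norm_divide norm_mult norm_minus_commute)
  also have "\<dots> \<le> norm (z - y) / (1/4)"
  proof (rule divide_left_mono)
    have "(1/2) * (1/2) \<le> norm z * norm y" using nz ny by (intro mult_mono) auto
    then show "1/4 \<le> norm z * norm y" by simp
    show "0 < norm z * norm y * (1/4)" using z0 y0 by simp
  qed simp
  finally show ?thesis by simp
qed

lemma ln_est: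
  assumes z: "z \<in> ball (1::complex) (1/2)" and y: "y \<in> ball (1::complex) (1/2)"
  shows "norm (Ln z - Ln y - inverse y * (z - y)) \<le> 4 * (norm (z - y))^2"
proof -
  define r where "r = norm (z - y)"
  define S where "S = ball (1::complex) (1/2) \<inter> cball y r"
  define f where "f \<xi> = Ln \<xi> - \<xi> * inverse y" for \<xi>
  have cS: "convex S" unfolding S_def by (intro convex_Int convex_ball convex_cball)
  have der: "(f has_field_derivative (inverse \<xi> - inverse y)) (at \<xi> within S)" if "\<xi> \<in> S" for \<xi>
  proof -
    have "\<xi> \<in> ball 1 (1/2)" using that by (simp add: S_def)
    then have "Re \<xi> > 0" by (rule ball_half_Re)
    then have "\<xi> \<notin> \<real>\<^sub>\<le>\<^sub>0" by (simp add: complex_nonpos_Reals_iff)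
    then have "(Ln has_field_derivative inverse \<xi>) (at \<xi>)" by (rule has_field_derivative_Ln)
    moreover have "((\<lambda>\<xi>. \<xi> * inverse y) has_field_derivative 1 * inverse y) (at \<xi>)"
      by (rule DERIV_cmult_right[OF DERIV_ident])
    ultimately have "((\<lambda>\<xi>. Ln \<xi> - \<xi> * inverse y) has_field_derivative (inverse \<xi> - 1 * inverse y)) (at \<xi>)"
      by (rule DERIV_diff)
    then show ?thesis unfolding f_def[abs_def] by (simp add: has_field_derivative_at_within)
  qed
  have bnd: "norm (inverse \<xi> - inverse y) \<le> 4 * r" if "\<xi> \<in> S" for \<xi>
  proof -
    have "norm (inverse \<xi> - inverse y) \<le> 4 * norm (\<xi> - y)"
      by (rule inv_lip) (use that y in \<open>auto simp: S_def\<close>)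
    also have "\<dots> \<le> 4 * r" using that by (simp add: S_def dist_norm norm_minus_commute)
    finally show ?thesis .
  qed
  have zS: "z \<in> S" and yS: "y \<in> S" using z y by (auto simp: S_def r_def dist_norm norm_minus_commute)
  have "norm (f z - f y) \<le> (4 * r) * norm (z - y)"
    by (rule field_differentiable_bound[OF cS der bnd zS yS])
  moreover have "f z - f y = Ln z - Ln y - inverse y * (z - y)" by (simp add: f_def algebra_simps)
  ultimately show ?thesis by (simp add: r_def power2_eq_square)
qed

lemma rho_ident:
  assumes "z \<noteq> 0"
  shows "Re (\<i> * z * cnj w) = (norm z)^2 * Im (w / z)"
proof -
  have d: "(Re z)^2 + (Im z)^2 \<noteq> 0" using assms by (simp add: complex_eq_iff)
  have "(norm z)^2 * Im (w / z) = Im w * Re z - Re w * Im z" by (simp add: Im_divide cmod_power2 d)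
  moreover have "Re (\<i> * z * cnj w) = Im w * Re z - Re w * Im z" by (simp add: algebra_simps)
  ultimately show ?thesis by simp
qed

lemma cinner_eq: "cinner (\<i> * u) v = Re (\<i> * u * cnj v)"
  by (simp add: cinner_def)

lemma rho_int:
  assumes u: "continuous_on {a..b} u" and v: "WD v h"
  shows "(\<lambda>t. cinner (\<i> * u t) (h t)) absolutely_integrable_on {a..b}"
proof -
  have c: "continuous_on {a..b} (\<lambda>t. \<i> * u t)" using u by (intro continuous_intros)
  have "(\<lambda>t. (\<i> * u t) * cnj (h t)) absolutely_integrable_on {a..b}"
    by (rule cont_mult_absint[OF c WD_int[OF WD_cnj[OF v]]])
  then have "(Re \<circ> (\<lambda>t. (\<i> * u t) * cnj (h t))) absolutely_integrable_on {a..b}"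
    by (rule absolutely_integrable_linear[OF _ bounded_linear_Re])
  then show ?thesis by (simp add: o_def cinner_def)
qed

lemma tail_piece:
  fixes V0 g :: "real \<Rightarrow> complex"
  assumes wd: "WD V0 g" and l: "norm l = 1" and ab: "a \<le> b"
    and near: "\<And>t. t \<in> {a..b} \<Longrightarrow> norm (V0 t - l) < 1/2"
  shows "integral {a..b} (\<lambda>t. cinner (\<i> * V0 t) (g t)) =
          Im (Ln (cnj l * V0 b)) - Im (Ln (cnj l * V0 a)) +
          integral {a..b} (\<lambda>t. ((norm (V0 t))^2 - 1) * Im (g t / V0 t))"
proof -
  have ll: "cnj l * l = 1"
  proof -
    have "cnj l * l = complex_of_real ((norm l)^2)" using re_norm_sq[of l] by (simp add: complex_eq_iff mult.commute)
    then show ?thesis using l by simp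
  qed
  have l0: "cnj l \<noteq> 0" using ll by auto
  define u where "u t = cnj l * V0 t" for t
  have wdu: "WD u (\<lambda>t. cnj l * g t)" unfolding u_def[abs_def] by (rule WD_cmul[OF wd])
  have uS: "u t \<in> ball 1 (1/2)" if "t \<in> {a..b}" for t
  proof -
    have "1 - u t = cnj l * (l - V0 t)" using ll by (simp add: u_def algebra_simps)
    then have "norm (1 - u t) = norm (V0 t - l)" using l by (simp add: norm_mult norm_minus_commute)
    then show ?thesis using near[OF that] by (simp add: dist_norm)
  qed
  have V0nz: "V0 t \<noteq> 0" if "t \<in> {a..b}" for t
    using uS[OF that] ball_half_norm by (force simp: u_def)
  note c = chain[OF wdu ab, of "ball 1 (1/2)" Ln inverse 4 4, OF uS ln_est inv_lip]
  define k where "k t = g t / V0 t" for t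
  have keq: "inverse (u t) * (cnj l * g t) = k t" if "t \<in> {a..b}" for t
    using l0 V0nz[OF that] by (simp add: u_def k_def field_simps)
  have ki: "k integrable_on {a..b}"
    using integrable_eq[OF c(1)[unfolded absolutely_integrable_on_def, THEN conjunct1] keq] by simp
  have kint: "integral {a..b} k = Ln (u b) - Ln (u a)"
  proof -
    have "integral {a..b} (\<lambda>t. inverse (u t) * (cnj l * g t)) = integral {a..b} k"
      by (rule integral_cong[OF keq])
    then show ?thesis using c(2) by simp
  qed
  have imk: "integral {a..b} (\<lambda>t. Im (k t)) = Im (Ln (u b)) - Im (Ln (u a))"
    using integral_linear[OF ki bounded_linear_Im] kint by (simp add: o_def)
  have imki: "(\<lambda>t. Im (k t)) integrable_on {a..b}"
    using integrable_linear[OF ki bounded_linear_Im] by (simp add: o_def)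
  have ri: "(\<lambda>t. cinner (\<i> * V0 t) (g t)) integrable_on {a..b}"
    using rho_int[OF WD_cont[OF wd] wd] by (simp add: absolutely_integrable_on_def)
  have "integral {a..b} (\<lambda>t. cinner (\<i> * V0 t) (g t)) =
        integral {a..b} (\<lambda>t. Im (k t)) + integral {a..b} (\<lambda>t. cinner (\<i> * V0 t) (g t) - Im (k t))"
    using integral_diff[OF ri imki] by simp
  also have "integral {a..b} (\<lambda>t. cinner (\<i> * V0 t) (g t) - Im (k t)) =
             integral {a..b} (\<lambda>t. ((norm (V0 t))^2 - 1) * Im (g t / V0 t))"
  proof (rule integral_cong)
    fix t assume t: "t \<in> {a..b}"
    have "cinner (\<i> * V0 t) (g t) = (norm (V0 t))^2 * Im (g t / V0 t)"
      unfolding cinner_eq by (rule rho_ident[OF V0nz[OF t]])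
    then show "cinner (\<i> * V0 t) (g t) - Im (k t) = ((norm (V0 t))^2 - 1) * Im (g t / V0 t)"
      by (simp add: k_def algebra_simps)
  qed
  finally show ?thesis using imk by (simp add: u_def)
qed



lemma WD_meas: assumes "WD v g" shows "v \<in> borel_measurable lborel"
proof -
  have "v \<in> borel_measurable borel" by (rule borel_measurable_continuous_onI[OF WD_cont[OF assms]])
  then show ?thesis by simp
qed

lemma rho_setint:
  assumes u: "WD u g1" and v: "WD v h" and hm: "h \<in> borel_measurable lborel"
  shows "set_integrable lborel {a..b} (\<lambda>t. cinner (\<i> * u t) (h t))"
proof (rule absint_lborel)
  have um[measurable]: "u \<in> borel_measurable lborel" by (rule WD_meas[OF u])
  note hm[measurable]
  show "(\<lambda>t. cinner (\<i> * u t) (h t)) \<in> borel_measurable lborel"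
    unfolding cinner_def by measurable
  show "(\<lambda>t. cinner (\<i> * u t) (h t)) absolutely_integrable_on {a..b}"
    by (rule rho_int[OF WD_cont[OF u] v])
qed simp

lemma sig_setint:
  fixes V0 g :: "real \<Rightarrow> complex"
  assumes wd: "WD V0 g" and gL2: "g \<in> L2"
    and etaL2: "(\<lambda>x. complex_of_real (1 - (cmod (V0 x))\<^sup>2)) \<in> L2"
    and l: "norm l = 1" and A: "A \<in> sets borel"
    and near: "\<And>x. x \<in> A \<Longrightarrow> norm (V0 x - l) < 1/2"
  shows "set_integrable lborel A (\<lambda>t. ((norm (V0 t))^2 - 1) * Im (g t / V0 t))"
  unfolding set_integrable_def
proof (rule l2_prod_int[OF etaL2 gL2, of _ 2])
  have [measurable]: "V0 \<in> borel_measurable lborel" by (rule WD_meas[OF wd])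
  have [measurable]: "g \<in> borel_measurable lborel" using gL2 by (simp add: L2_def)
  note A[measurable]
  show "(\<lambda>x. indicator A x *\<^sub>R (((norm (V0 x))^2 - 1) * Im (g x / V0 x))) \<in> borel_measurable lborel"
    by measurable
  fix x
  show "\<bar>indicator A x *\<^sub>R (((norm (V0 x))^2 - 1) * Im (g x / V0 x))\<bar>
        \<le> 2 * (norm (complex_of_real (1 - (cmod (V0 x))\<^sup>2)) * norm (g x))"
  proof (cases "x \<in> A")
    case True
    have "norm l \<le> norm (V0 x - l) + norm (V0 x)" using norm_triangle_ineq[of "l - V0 x" "V0 x"]
      by (simp add: norm_minus_commute)
    then have nv: "norm (V0 x) \<ge> 1/2" using near[OF True] l by simp
    have im: "\<bar>Im (g x / V0 x)\<bar> \<le> 2 * norm (g x)"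
    proof -
      have "\<bar>Im (g x / V0 x)\<bar> \<le> norm (g x / V0 x)" by (rule abs_Im_le_cmod)
      also have "\<dots> = norm (g x) / norm (V0 x)" by (simp add: norm_divide)
      also have "\<dots> \<le> norm (g x) / (1/2)" using nv by (intro divide_left_mono) auto
      finally show ?thesis by simp
    qed
    have "\<bar>((norm (V0 x))^2 - 1) * Im (g x / V0 x)\<bar> = \<bar>1 - (norm (V0 x))^2\<bar> * \<bar>Im (g x / V0 x)\<bar>"
      by (simp add: abs_mult abs_minus_commute)
    also have "\<dots> \<le> \<bar>1 - (norm (V0 x))^2\<bar> * (2 * norm (g x))" using im by (intro mult_left_mono) auto
    finally show ?thesis using True unfolding norm_of_real by (simp add: mult.left_commute)
  qed simp
qed

lemma mom_top:
  fixes V0 g :: "real \<Rightarrow> complex"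
  assumes wd: "WD V0 g" and gL2: "g \<in> L2"
    and etaL2: "(\<lambda>x. complex_of_real (1 - (cmod (V0 x))\<^sup>2)) \<in> L2"
    and lim: "(V0 \<longlongrightarrow> l) at_top" and l: "norm l = 1"
  shows "\<exists>L. ((\<lambda>R. integral {0..R} (\<lambda>t. cinner (\<i> * V0 t) (g t))) \<longlongrightarrow> L) at_top"
proof -
  define rho where "rho t = cinner (\<i> * V0 t) (g t)" for t
  define sig where "sig t = ((norm (V0 t))^2 - 1) * Im (g t / V0 t)" for t
  have "eventually (\<lambda>x. dist (V0 x) l < 1/2) at_top" using lim by (rule tendstoD) simp
  then obtain N1 where N1: "\<And>x. x \<ge> N1 \<Longrightarrow> dist (V0 x) l < 1/2" by (auto simp: eventually_at_top_linorder)
  define N where "N = max N1 0"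
  have N0: "N \<ge> 0" by (simp add: N_def)
  have near: "norm (V0 x - l) < 1/2" if "x \<in> {N..}" for x
    using N1[of x] that by (simp add: N_def dist_norm)
  have si: "set_integrable lborel {N..} sig"
    unfolding sig_def[abs_def] by (rule sig_setint[OF wd gL2 etaL2 l _ near]) simp
  have ri: "rho integrable_on {a..b}" for a b
    using rho_int[OF WD_cont[OF wd] wd] by (simp add: rho_def[abs_def] absolutely_integrable_on_def)
  have eq: "integral {0..R} rho =
      integral {0..N} rho + (Im (Ln (cnj l * V0 R)) - Im (Ln (cnj l * V0 N)) + (LBINT t:{N..R}. sig t))"
    if R: "R \<ge> N" for R
  proof -
    have "integral {0..R} rho = integral {0..N} rho + integral {N..R} rho"
      using Henstock_Kurzweil_Integration.integral_combine[OF N0 R ri] by simp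
    also have "integral {N..R} rho = Im (Ln (cnj l * V0 R)) - Im (Ln (cnj l * V0 N)) + integral {N..R} sig"
      unfolding rho_def[abs_def] sig_def[abs_def] by (rule tail_piece[OF wd l R]) (use near in auto)
    also have "integral {N..R} sig = (LBINT t:{N..R}. sig t)"
      by (rule set_borel_integral_eq_integral(2)[symmetric], rule set_integrable_subset[OF si]) auto
    finally show ?thesis .
  qed
  have l1: "cnj l * l = 1"
  proof -
    have "cnj l * l = complex_of_real ((norm l)^2)" using re_norm_sq[of l] by (simp add: complex_eq_iff mult.commute)
    then show ?thesis using l by simp
  qed
  have tln: "((\<lambda>R. Im (Ln (cnj l * V0 R))) \<longlongrightarrow> 0) at_top"
  proof -
    have "((\<lambda>R. cnj l * V0 R) \<longlongrightarrow> cnj l * l) at_top" by (intro tendsto_intros lim)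
    then have "((\<lambda>R. cnj l * V0 R) \<longlongrightarrow> 1) at_top" using l1 by simp
    then have "((\<lambda>R. Ln (cnj l * V0 R)) \<longlongrightarrow> Ln 1) at_top" by (rule tendsto_Ln) simp
    then have "((\<lambda>R. Im (Ln (cnj l * V0 R))) \<longlongrightarrow> Im (Ln 1)) at_top" by (rule tendsto_Im)
    then show ?thesis by simp
  qed
  have tsig: "((\<lambda>R. LBINT t:{N..R}. sig t) \<longlongrightarrow> (LBINT t:{N..}. sig t)) at_top"
    by (rule tendsto_set_lebesgue_integral_at_top[OF _ si]) simp
  have "((\<lambda>R. integral {0..N} rho + (Im (Ln (cnj l * V0 R)) - Im (Ln (cnj l * V0 N)) + (LBINT t:{N..R}. sig t)))
        \<longlongrightarrow> integral {0..N} rho + (0 - Im (Ln (cnj l * V0 N)) + (LBINT t:{N..}. sig t))) at_top"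
    by (intro tendsto_intros tln tsig)
  moreover have "eventually (\<lambda>R. integral {0..N} rho + (Im (Ln (cnj l * V0 R)) - Im (Ln (cnj l * V0 N)) + (LBINT t:{N..R}. sig t))
       = integral {0..R} rho) at_top"
    unfolding eventually_at_top_linorder by (intro exI[of _ N] allI impI) (rule eq[symmetric])
  ultimately have "((\<lambda>R. integral {0..R} rho) \<longlongrightarrow> integral {0..N} rho + (0 - Im (Ln (cnj l * V0 N)) + (LBINT t:{N..}. sig t))) at_top"
    by (rule Lim_transform_eventually)
  then show ?thesis unfolding rho_def[abs_def] by blast
qed


lemma mom_bot:
  fixes V0 g :: "real \<Rightarrow> complex"
  assumes wd: "WD V0 g" and gL2: "g \<in> L2"
    and etaL2: "(\<lambda>x. complex_of_real (1 - (cmod (V0 x))\<^sup>2)) \<in> L2"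
    and lim: "(V0 \<longlongrightarrow> l) at_bot" and l: "norm l = 1"
  shows "\<exists>L. ((\<lambda>R. integral {-R..0} (\<lambda>t. cinner (\<i> * V0 t) (g t))) \<longlongrightarrow> L) at_top"
proof -
  define rho where "rho t = cinner (\<i> * V0 t) (g t)" for t
  define sig where "sig t = ((norm (V0 t))^2 - 1) * Im (g t / V0 t)" for t
  have "eventually (\<lambda>x. dist (V0 x) l < 1/2) at_bot" using lim by (rule tendstoD) simp
  then obtain N1 where N1: "\<And>x. x \<le> N1 \<Longrightarrow> dist (V0 x) l < 1/2" by (auto simp: eventually_at_bot_linorder)
  define N where "N = max (- N1) 0"
  have N0: "N \<ge> 0" by (simp add: N_def)
  have near: "norm (V0 x - l) < 1/2" if "x \<in> {..-N}" for x
    using N1[of x] that by (simp add: N_def dist_norm)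
  have si: "set_integrable lborel {..-N} sig"
    unfolding sig_def[abs_def] by (rule sig_setint[OF wd gL2 etaL2 l _ near]) simp
  have ri: "rho integrable_on {a..b}" for a b
    using rho_int[OF WD_cont[OF wd] wd] by (simp add: rho_def[abs_def] absolutely_integrable_on_def)
  have eq: "integral {-R..0} rho =
      (Im (Ln (cnj l * V0 (-N))) - Im (Ln (cnj l * V0 (-R))) + (LBINT t:{-R..-N}. sig t)) + integral {-N..0} rho"
    if R: "R \<ge> N" for R
  proof -
    have R': "-R \<le> -N" using R by simp
    have N0': "-N \<le> 0" using N0 by simp
    have "integral {-R..0} rho = integral {-R..-N} rho + integral {-N..0} rho"
      using Henstock_Kurzweil_Integration.integral_combine[OF R' N0' ri] by simp
    also have "integral {-R..-N} rho = Im (Ln (cnj l * V0 (-N))) - Im (Ln (cnj l * V0 (-R))) + integral {-R..-N} sig"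
      unfolding rho_def[abs_def] sig_def[abs_def] by (rule tail_piece[OF wd l R']) (use near in auto)
    also have "integral {-R..-N} sig = (LBINT t:{-R..-N}. sig t)"
      by (rule set_borel_integral_eq_integral(2)[symmetric], rule set_integrable_subset[OF si]) auto
    finally show ?thesis .
  qed
  have l1: "cnj l * l = 1"
  proof -
    have "cnj l * l = complex_of_real ((norm l)^2)" using re_norm_sq[of l] by (simp add: complex_eq_iff mult.commute)
    then show ?thesis using l by simp
  qed
  have lim': "((\<lambda>R. V0 (-R)) \<longlongrightarrow> l) at_top"
    by (rule filterlim_compose[OF lim filterlim_uminus_at_bot_at_top])
  have tln: "((\<lambda>R. Im (Ln (cnj l * V0 (-R)))) \<longlongrightarrow> 0) at_top"
  proof -
    have "((\<lambda>R. cnj l * V0 (-R)) \<longlongrightarrow> cnj l * l) at_top" by (intro tendsto_intros lim')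
    then have "((\<lambda>R. cnj l * V0 (-R)) \<longlongrightarrow> 1) at_top" using l1 by simp
    then have "((\<lambda>R. Ln (cnj l * V0 (-R))) \<longlongrightarrow> Ln 1) at_top" by (rule tendsto_Ln) simp
    then have "((\<lambda>R. Im (Ln (cnj l * V0 (-R)))) \<longlongrightarrow> Im (Ln 1)) at_top" by (rule tendsto_Im)
    then show ?thesis by simp
  qed
  have tsig0: "((\<lambda>a. LBINT t:{a..-N}. sig t) \<longlongrightarrow> (LBINT t:{..-N}. sig t)) at_bot"
    by (rule tendsto_set_lebesgue_integral_at_bot[OF _ si]) simp
  have tsig: "((\<lambda>R. LBINT t:{-R..-N}. sig t) \<longlongrightarrow> (LBINT t:{..-N}. sig t)) at_top"
    by (rule filterlim_compose[OF tsig0 filterlim_uminus_at_bot_at_top])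
  have "((\<lambda>R. (Im (Ln (cnj l * V0 (-N))) - Im (Ln (cnj l * V0 (-R))) + (LBINT t:{-R..-N}. sig t)) + integral {-N..0} rho)
        \<longlongrightarrow> (Im (Ln (cnj l * V0 (-N))) - 0 + (LBINT t:{..-N}. sig t)) + integral {-N..0} rho) at_top"
    by (intro tendsto_intros tln tsig)
  moreover have "eventually (\<lambda>R. (Im (Ln (cnj l * V0 (-N))) - Im (Ln (cnj l * V0 (-R))) + (LBINT t:{-R..-N}. sig t)) + integral {-N..0} rho
       = integral {-R..0} rho) at_top"
    unfolding eventually_at_top_linorder by (intro exI[of _ N] allI impI) (rule eq[symmetric])
  ultimately have "((\<lambda>R. integral {-R..0} rho) \<longlongrightarrow> (Im (Ln (cnj l * V0 (-N))) - 0 + (LBINT t:{..-N}. sig t)) + integral {-N..0} rho) at_top"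
    by (rule Lim_transform_eventually)
  then show ?thesis unfolding rho_def[abs_def] by blast
qed

lemma mom_exists:
  fixes V0 g :: "real \<Rightarrow> complex"
  assumes wd: "WD V0 g" and gL2: "g \<in> L2"
    and etaL2: "(\<lambda>x. complex_of_real (1 - (cmod (V0 x))\<^sup>2)) \<in> L2"
    and lim1: "(V0 \<longlongrightarrow> l1) at_top" and l1: "norm l1 = 1"
    and lim2: "(V0 \<longlongrightarrow> l2) at_bot" and l2: "norm l2 = 1"
  shows "\<exists>L. ((\<lambda>R. integral {-R..R} (\<lambda>t. cinner (\<i> * V0 t) (g t))) \<longlongrightarrow> L) at_top"
proof -
  define rho where "rho t = cinner (\<i> * V0 t) (g t)" for t
  obtain A where A: "((\<lambda>R. integral {0..R} rho) \<longlongrightarrow> A) at_top"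
    using mom_top[OF wd gL2 etaL2 lim1 l1] unfolding rho_def[abs_def] by blast
  obtain B where B: "((\<lambda>R. integral {-R..0} rho) \<longlongrightarrow> B) at_top"
    using mom_bot[OF wd gL2 etaL2 lim2 l2] unfolding rho_def[abs_def] by blast
  have ri: "rho integrable_on {a..b}" for a b
    using rho_int[OF WD_cont[OF wd] wd] by (simp add: rho_def[abs_def] absolutely_integrable_on_def)
  have "((\<lambda>R. integral {-R..0} rho + integral {0..R} rho) \<longlongrightarrow> B + A) at_top"
    by (intro tendsto_intros A B)
  moreover have "eventually (\<lambda>R. integral {-R..0} rho + integral {0..R} rho = integral {-R..R} rho) at_top"
    unfolding eventually_at_top_linorder
  proof (intro exI[of _ 0] allI impI)
    fix R :: real assume R: "0 \<le> R"
    then have R': "-R \<le> 0" by simp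
    show "integral {-R..0} rho + integral {0..R} rho = integral {-R..R} rho"
      by (rule Henstock_Kurzweil_Integration.integral_combine[OF R' R ri])
  qed
  ultimately have "((\<lambda>R. integral {-R..R} rho) \<longlongrightarrow> B + A) at_top"
    by (rule Lim_transform_eventually)
  then show ?thesis unfolding rho_def[abs_def] by blast
qed



lemma eta_int:
  assumes "(\<lambda>x. complex_of_real (1 - (cmod (V0 x))\<^sup>2)) \<in> L2"
  shows "integrable lborel (\<lambda>x. (1 - (cmod (V0 x))\<^sup>2)\<^sup>2)"
proof -
  have "integrable lborel (\<lambda>x. (cmod (complex_of_real (1 - (cmod (V0 x))\<^sup>2)))\<^sup>2)"
    using assms by (simp add: L2_def)
  then show ?thesis unfolding norm_of_real power2_abs .
qed

lemma norm_lim_top: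
  assumes eta: "(\<lambda>x. complex_of_real (1 - (cmod (V0 x))\<^sup>2)) \<in> L2"
    and lim: "(V0 \<longlongrightarrow> l) at_top"
  shows "norm l = 1"
proof -
  have "((\<lambda>x. (1 - (cmod (V0 x))\<^sup>2)\<^sup>2) \<longlongrightarrow> (1 - (cmod l)\<^sup>2)\<^sup>2) at_top"
    by (intro tendsto_intros lim)
  then have "(1 - (cmod l)\<^sup>2)\<^sup>2 = 0" by (rule lim_zero_top[OF eta_int[OF eta], rotated]) simp
  then have "(cmod l)\<^sup>2 = 1" by simp
  then have "cmod l = 1 \<or> cmod l = -1" by (simp add: power2_eq_1_iff)
  then show ?thesis using norm_ge_zero[of l] by linarith
qed

lemma norm_lim_bot:
  assumes eta: "(\<lambda>x. complex_of_real (1 - (cmod (V0 x))\<^sup>2)) \<in> L2"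
    and lim: "(V0 \<longlongrightarrow> l) at_bot"
  shows "norm l = 1"
proof -
  have "((\<lambda>x. (1 - (cmod (V0 x))\<^sup>2)\<^sup>2) \<longlongrightarrow> (1 - (cmod l)\<^sup>2)\<^sup>2) at_bot"
    by (intro tendsto_intros lim)
  then have "(1 - (cmod l)\<^sup>2)\<^sup>2 = 0" by (rule lim_zero_bot[OF eta_int[OF eta], rotated]) simp
  then have "(cmod l)\<^sup>2 = 1" by simp
  then have "cmod l = 1 \<or> cmod l = -1" by (simp add: power2_eq_1_iff)
  then show ?thesis using norm_ge_zero[of l] by linarith
qed

lemma sq_sum_le: "(a + b)\<^sup>2 \<le> 2 * a\<^sup>2 + 2 * (b::real)\<^sup>2"
proof -
  have "(a + b)\<^sup>2 = a\<^sup>2 + 2 * a * b + b\<^sup>2" by (simp add: power2_eq_square algebra_simps)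
  moreover have "(a - b)\<^sup>2 = a\<^sup>2 - 2 * a * b + b\<^sup>2" by (simp add: power2_eq_square algebra_simps)
  moreover have "0 \<le> (a - b)\<^sup>2" by simp
  ultimately show ?thesis by linarith
qed

lemma hwd_add:
  assumes hu: "has_weak_deriv u g" and hv: "has_weak_deriv v h"
  shows "has_weak_deriv (\<lambda>x. u x + v x) (\<lambda>x. g x + h x)"
  unfolding has_weak_deriv_def
proof (intro conjI allI impI)
  fix a b :: real
  have si: "set_integrable lborel {a..b} g" "set_integrable lborel {a..b} h"
    using hu hv by (auto simp: has_weak_deriv_def)
  show "set_integrable lborel {a..b} (\<lambda>x. g x + h x)" by (rule set_integral_add(1)[OF si])
  assume ab: "a \<le> b"
  have e1: "u b - u a = (LBINT x:{a..b}. g x)" and e2: "v b - v a = (LBINT x:{a..b}. h x)"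
    using hu hv ab by (auto simp: has_weak_deriv_def)
  have "(LBINT x:{a..b}. g x + h x) = (LBINT x:{a..b}. g x) + (LBINT x:{a..b}. h x)"
    by (rule set_integral_add(2)[OF si])
  also have "\<dots> = (u b - u a) + (v b - v a)" using e1 e2 by simp
  finally show "u b + v b - (u a + v a) = (LBINT x:{a..b}. g x + h x)" by (simp add: algebra_simps)
qed

lemma Z1_part:
  assumes V0: "V0 \<in> Z1" and wH: "w \<in> H1"
  shows "(\<lambda>x. V0 x + w x) \<in> Z1"
proof -
  have V0L: "V0 \<in> Linf" and eta: "(\<lambda>x. complex_of_real (1 - (cmod (V0 x))\<^sup>2)) \<in> L2"
    and g0L2: "weak_deriv V0 \<in> L2"
    using V0 by (auto simp: Z1_def X1_def)
  obtain gg where "has_weak_deriv V0 gg" using V0 by (auto simp: Z1_def X1_def)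
  then have hV0: "has_weak_deriv V0 (weak_deriv V0)" by (rule wd_weak_deriv)
  obtain gw where "has_weak_deriv w gw" using wH by (auto simp: H1_def)
  then have hw: "has_weak_deriv w (weak_deriv w)" by (rule wd_weak_deriv)
  have hL2: "weak_deriv w \<in> L2" and wL2: "w \<in> L2" using wH by (auto simp: H1_def)
  obtain Bw where Bw: "\<And>x. norm (w x) \<le> Bw" using H1_facts(1)[OF wH] by blast
  have wm[measurable]: "w \<in> borel_measurable lborel" using wL2 by (simp add: L2_def)
  have V0m[measurable]: "V0 \<in> borel_measurable lborel" using V0L by (simp add: Linf_def)
  obtain C0 where C0: "AE x in lborel. cmod (V0 x) \<le> C0" using V0L by (auto simp: Linf_def)
  have hV: "has_weak_deriv (\<lambda>x. V0 x + w x) (\<lambda>x. weak_deriv V0 x + weak_deriv w x)"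
    by (rule hwd_add[OF hV0 hw])
  have hk: "has_weak_deriv (\<lambda>x. V0 x + w x) (weak_deriv (\<lambda>x. V0 x + w x))"
    by (rule wd_weak_deriv[OF hV])
  have AEk: "AE x in lborel. weak_deriv (\<lambda>x. V0 x + w x) x = weak_deriv V0 x + weak_deriv w x"
    by (rule hwd_unique[OF hk hV])
  have Linf: "(\<lambda>x. V0 x + w x) \<in> Linf"
    unfolding Linf_def
  proof (intro CollectI conjI exI)
    show "(\<lambda>x. V0 x + w x) \<in> borel_measurable lborel" by measurable
    show "AE x in lborel. cmod (V0 x + w x) \<le> C0 + Bw"
      using C0 proof eventually_elim
      case (elim x)
      have "cmod (V0 x + w x) \<le> cmod (V0 x) + cmod (w x)" by (rule norm_triangle_ineq)
      then show ?case using elim Bw[of x] by simp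
    qed
  qed
  have g0m[measurable]: "weak_deriv V0 \<in> borel_measurable lborel" using g0L2 by (simp add: L2_def)
  have hm[measurable]: "weak_deriv w \<in> borel_measurable lborel" using hL2 by (simp add: L2_def)
  have km[measurable]: "weak_deriv (\<lambda>x. V0 x + w x) \<in> borel_measurable lborel" by (rule hwd_meas[OF hk])
  have kL2: "weak_deriv (\<lambda>x. V0 x + w x) \<in> L2"
    unfolding L2_def
  proof (intro CollectI conjI km)
    have i1: "integrable lborel (\<lambda>x. 2 * (cmod (weak_deriv V0 x))\<^sup>2 + 2 * (cmod (weak_deriv w x))\<^sup>2)"
      using g0L2 hL2 by (simp add: L2_def)
    have "integrable lborel (\<lambda>x. (cmod (weak_deriv V0 x + weak_deriv w x))\<^sup>2)"
    proof (rule Bochner_Integration.integrable_bound[OF i1])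
      show "(\<lambda>x. (cmod (weak_deriv V0 x + weak_deriv w x))\<^sup>2) \<in> borel_measurable lborel" by measurable
      show "AE x in lborel. norm ((cmod (weak_deriv V0 x + weak_deriv w x))\<^sup>2)
              \<le> norm (2 * (cmod (weak_deriv V0 x))\<^sup>2 + 2 * (cmod (weak_deriv w x))\<^sup>2)"
      proof (rule AE_I2)
        fix x
        define a where "a = cmod (weak_deriv V0 x)"
        define b where "b = cmod (weak_deriv w x)"
        have t: "cmod (weak_deriv V0 x + weak_deriv w x) \<le> a + b" unfolding a_def b_def by (rule norm_triangle_ineq)
        have "(cmod (weak_deriv V0 x + weak_deriv w x))\<^sup>2 \<le> (a + b)\<^sup>2"
          using t by (intro power_mono) auto
        also have "\<dots> \<le> 2 * a\<^sup>2 + 2 * b\<^sup>2" by (rule sq_sum_le)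
        finally show "norm ((cmod (weak_deriv V0 x + weak_deriv w x))\<^sup>2)
              \<le> norm (2 * (cmod (weak_deriv V0 x))\<^sup>2 + 2 * (cmod (weak_deriv w x))\<^sup>2)"
          by (simp add: a_def b_def)
      qed
    qed
    then show "integrable lborel (\<lambda>x. (cmod (weak_deriv (\<lambda>x. V0 x + w x) x))\<^sup>2)"
    proof (subst integrable_cong_AE[where g="\<lambda>x. (cmod (weak_deriv V0 x + weak_deriv w x))\<^sup>2"])
      show "AE x in lborel. (cmod (weak_deriv (\<lambda>x. V0 x + w x) x))\<^sup>2 = (cmod (weak_deriv V0 x + weak_deriv w x))\<^sup>2"
        using AEk by eventually_elim simp
    qed auto
  qed
  have etaV: "(\<lambda>x. complex_of_real (1 - (cmod (V0 x + w x))\<^sup>2)) \<in> L2"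
    unfolding L2_def
  proof (intro CollectI conjI)
    show "(\<lambda>x. complex_of_real (1 - (cmod (V0 x + w x))\<^sup>2)) \<in> borel_measurable lborel" by measurable
    define K where "K = 2 * C0 + Bw"
    have i1: "integrable lborel (\<lambda>x. 2 * (1 - (cmod (V0 x))\<^sup>2)\<^sup>2 + 2 * K\<^sup>2 * (cmod (w x))\<^sup>2)"
      using eta_int[OF eta] wL2 by (simp add: L2_def)
    have "integrable lborel (\<lambda>x. (1 - (cmod (V0 x + w x))\<^sup>2)\<^sup>2)"
    proof (rule Bochner_Integration.integrable_bound[OF i1])
      show "(\<lambda>x. (1 - (cmod (V0 x + w x))\<^sup>2)\<^sup>2) \<in> borel_measurable lborel" by measurable
      show "AE x in lborel. norm ((1 - (cmod (V0 x + w x))\<^sup>2)\<^sup>2)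
              \<le> norm (2 * (1 - (cmod (V0 x))\<^sup>2)\<^sup>2 + 2 * K\<^sup>2 * (cmod (w x))\<^sup>2)"
        using C0 proof eventually_elim
        case (elim x)
        define a where "a = 1 - (cmod (V0 x))\<^sup>2"
        define t where "t = (cmod (V0 x + w x))\<^sup>2 - (cmod (V0 x))\<^sup>2"
        have d: "\<bar>cmod (V0 x + w x) - cmod (V0 x)\<bar> \<le> cmod (w x)"
          using norm_triangle_ineq3[of "V0 x + w x" "V0 x"] by simp
        have s: "cmod (V0 x + w x) + cmod (V0 x) \<le> K"
        proof -
          have "cmod (V0 x + w x) \<le> cmod (V0 x) + cmod (w x)" by (rule norm_triangle_ineq)
          then show ?thesis using elim Bw[of x] by (simp add: K_def)
        qed
        have "t = (cmod (V0 x + w x) - cmod (V0 x)) * (cmod (V0 x + w x) + cmod (V0 x))"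
          by (simp add: t_def power2_eq_square algebra_simps)
        then have "\<bar>t\<bar> = \<bar>cmod (V0 x + w x) - cmod (V0 x)\<bar> * \<bar>cmod (V0 x + w x) + cmod (V0 x)\<bar>"
          by (simp add: abs_mult)
        also have "\<bar>cmod (V0 x + w x) + cmod (V0 x)\<bar> = cmod (V0 x + w x) + cmod (V0 x)" by simp
        finally have "\<bar>t\<bar> = \<bar>cmod (V0 x + w x) - cmod (V0 x)\<bar> * (cmod (V0 x + w x) + cmod (V0 x))" .
        also have "\<dots> \<le> cmod (w x) * K"
          using d s by (intro mult_mono) auto
        finally have tK: "\<bar>t\<bar> \<le> K * cmod (w x)" by (simp add: mult.commute)
        have "1 - (cmod (V0 x + w x))\<^sup>2 = a - t" by (simp add: a_def t_def)
        then have "(1 - (cmod (V0 x + w x))\<^sup>2)\<^sup>2 = (a - t)\<^sup>2" by simp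
        also have "\<dots> \<le> 2 * a\<^sup>2 + 2 * t\<^sup>2" using sq_sum_le[of a "-t"] by simp
        also have "\<bar>t\<bar>\<^sup>2 \<le> (K * cmod (w x))\<^sup>2"
          by (rule power_mono[OF tK abs_ge_zero])
        then have "t\<^sup>2 \<le> (K * cmod (w x))\<^sup>2" by simp
        then have "2 * a\<^sup>2 + 2 * t\<^sup>2 \<le> 2 * a\<^sup>2 + 2 * K\<^sup>2 * (cmod (w x))\<^sup>2"
          by (simp add: power_mult_distrib)
        finally have "(1 - (cmod (V0 x + w x))\<^sup>2)\<^sup>2 \<le> 2 * a\<^sup>2 + 2 * K\<^sup>2 * (cmod (w x))\<^sup>2" .
        then show ?case by (simp add: a_def)
      qed
    qed
    then show "integrable lborel (\<lambda>x. (cmod (complex_of_real (1 - (cmod (V0 x + w x))\<^sup>2)))\<^sup>2)"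
      unfolding norm_of_real power2_abs .
  qed
  obtain l1 where l1: "(V0 \<longlongrightarrow> l1) at_top" using V0 by (auto simp: Z1_def)
  obtain l2 where l2: "(V0 \<longlongrightarrow> l2) at_bot" using V0 by (auto simp: Z1_def)
  have "((\<lambda>x. V0 x + w x) \<longlongrightarrow> l1 + 0) at_top" by (intro tendsto_intros l1 H1_facts(2)[OF wH])
  moreover have "((\<lambda>x. V0 x + w x) \<longlongrightarrow> l2 + 0) at_bot" by (intro tendsto_intros l2 H1_facts(3)[OF wH])
  ultimately show ?thesis
    unfolding Z1_def X1_def using Linf hV kL2 etaV by auto
qed



lemma cinner_bound: "\<bar>cinner (\<i> * a) b\<bar> \<le> norm a * norm b"
proof -
  have "\<bar>cinner (\<i> * a) b\<bar> \<le> norm (\<i> * a * cnj b)" unfolding cinner_def by (rule abs_Re_le_cmod)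
  also have "\<dots> = norm a * norm b" by (simp add: norm_mult)
  finally show ?thesis .
qed

lemma cinner_int:
  assumes "u \<in> L2" "v \<in> L2"
  shows "integrable lborel (\<lambda>x. cinner (\<i> * u x) (v x))"
proof (rule l2_prod_int[OF assms, of _ 1])
  have [measurable]: "u \<in> borel_measurable lborel" "v \<in> borel_measurable lborel" using assms by (auto simp: L2_def)
  show "(\<lambda>x. cinner (\<i> * u x) (v x)) \<in> borel_measurable lborel" unfolding cinner_def by measurable
  show "\<bar>cinner (\<i> * u x) (v x)\<bar> \<le> 1 * (norm (u x) * norm (v x))" for x
    using cinner_bound[of "u x" "v x"] by simp
qed

theorem lemma2:
  fixes V0 w :: "real \<Rightarrow> complex"
  assumes "V0 \<in> Z1" and "w \<in> H1"
  shows "(\<lambda>x. V0 x + w x) \<in> Z1 \<and>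
         momentum (\<lambda>x. V0 x + w x) =
           momentum V0
           + 1/2 * (LINT x|lborel. cinner (\<i> * w x) (weak_deriv w x))
           + (LINT x|lborel. cinner (\<i> * w x) (weak_deriv V0 x))"
proof -
  note V0 = assms(1) and wH = assms(2)
  have Z: "(\<lambda>x. V0 x + w x) \<in> Z1" by (rule Z1_part[OF V0 wH])
  define g0 where "g0 = weak_deriv V0"
  define h where "h = weak_deriv w"
  define k where "k = weak_deriv (\<lambda>x. V0 x + w x)"
  have eta: "(\<lambda>x. complex_of_real (1 - (cmod (V0 x))\<^sup>2)) \<in> L2"
    and g0L2: "g0 \<in> L2" using V0 by (auto simp: Z1_def X1_def g0_def)
  obtain gg where "has_weak_deriv V0 gg" using V0 by (auto simp: Z1_def X1_def)
  then have hV0: "has_weak_deriv V0 g0" unfolding g0_def by (rule wd_weak_deriv)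
  obtain gw where "has_weak_deriv w gw" using wH by (auto simp: H1_def)
  then have hw: "has_weak_deriv w h" unfolding h_def by (rule wd_weak_deriv)
  have hL2: "h \<in> L2" and wL2: "w \<in> L2" using wH by (auto simp: H1_def h_def)
  obtain l1 where l1: "(V0 \<longlongrightarrow> l1) at_top" using V0 by (auto simp: Z1_def)
  obtain l2 where l2: "(V0 \<longlongrightarrow> l2) at_bot" using V0 by (auto simp: Z1_def)
  have nl1: "norm l1 = 1" by (rule norm_lim_top[OF eta l1])
  have nl2: "norm l2 = 1" by (rule norm_lim_bot[OF eta l2])
  have wd0: "WD V0 g0" by (rule hwd_WD[OF hV0])
  have wdw: "WD w h" by (rule hwd_WD[OF hw])
  have hV: "has_weak_deriv (\<lambda>x. V0 x + w x) (\<lambda>x. g0 x + h x)" by (rule hwd_add[OF hV0 hw])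
  have wdV: "WD (\<lambda>x. V0 x + w x) (\<lambda>x. g0 x + h x)" by (rule hwd_WD[OF hV])
  have hk: "has_weak_deriv (\<lambda>x. V0 x + w x) k" unfolding k_def by (rule wd_weak_deriv[OF hV])
  have AEk: "AE x in lborel. k x = g0 x + h x" by (rule hwd_unique[OF hk hV])
  have g0m[measurable]: "g0 \<in> borel_measurable lborel" using g0L2 by (simp add: L2_def)
  have hm[measurable]: "h \<in> borel_measurable lborel" using hL2 by (simp add: L2_def)
  have km[measurable]: "k \<in> borel_measurable lborel" by (rule hwd_meas[OF hk])
  have V0m[measurable]: "V0 \<in> borel_measurable lborel" by (rule WD_meas[OF wd0])
  have wm[measurable]: "w \<in> borel_measurable lborel" by (rule WD_meas[OF wdw])
  define r0 where "r0 t = cinner (\<i> * V0 t) (g0 t)" for t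
  define rW where "rW t = cinner (\<i> * w t) (h t)" for t
  define rX where "rX t = cinner (\<i> * w t) (g0 t)" for t
  define rY where "rY t = cinner (\<i> * V0 t) (h t)" for t
  define Bd where "Bd R = cinner (\<i> * V0 R) (w R) - cinner (\<i> * V0 (-R)) (w (-R))" for R
  have ri0: "r0 integrable_on {a..b}" for a b
    using rho_int[OF WD_cont[OF wd0] wd0] by (simp add: r0_def[abs_def] absolutely_integrable_on_def)
  have riW: "rW integrable_on {a..b}" for a b
    using rho_int[OF WD_cont[OF wdw] wdw] by (simp add: rW_def[abs_def] absolutely_integrable_on_def)
  have riX: "rX integrable_on {a..b}" for a b
    using rho_int[OF WD_cont[OF wdw] wd0] by (simp add: rX_def[abs_def] absolutely_integrable_on_def)
  have riY: "rY integrable_on {a..b}" for a b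
    using rho_int[OF WD_cont[OF wd0] wdw] by (simp add: rY_def[abs_def] absolutely_integrable_on_def)
  have wdP: "WD (\<lambda>x. (\<i> * V0 x) * cnj (w x)) (\<lambda>x. (\<i> * V0 x) * cnj (h x) + (\<i> * g0 x) * cnj (w x))"
    by (rule WD_mult[OF WD_cmul[OF wd0] WD_cnj[OF wdw]])
  have parts: "integral {a..b} rY = (cinner (\<i> * V0 b) (w b) - cinner (\<i> * V0 a) (w a)) + integral {a..b} rX"
    if ab: "a \<le> b" for a b
  proof -
    have "(\<i> * V0 b) * cnj (w b) - (\<i> * V0 a) * cnj (w a) =
          integral {a..b} (\<lambda>x. (\<i> * V0 x) * cnj (h x) + (\<i> * g0 x) * cnj (w x))"
      by (rule WD_eq[OF wdP ab])
    then have "Re ((\<i> * V0 b) * cnj (w b) - (\<i> * V0 a) * cnj (w a)) =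
          Re (integral {a..b} (\<lambda>x. (\<i> * V0 x) * cnj (h x) + (\<i> * g0 x) * cnj (w x)))" by simp
    also have "\<dots> = integral {a..b} (Re \<circ> (\<lambda>x. (\<i> * V0 x) * cnj (h x) + (\<i> * g0 x) * cnj (w x)))"
      by (rule integral_linear[OF WD_intg[OF wdP] bounded_linear_Re, symmetric])
    also have "\<dots> = integral {a..b} (\<lambda>t. rY t - rX t)"
      by (rule integral_cong) (simp add: rY_def rX_def cinner_def algebra_simps)
    also have "\<dots> = integral {a..b} rY - integral {a..b} rX" by (rule integral_diff[OF riY riX])
    finally have "integral {a..b} rY - integral {a..b} rX =
                  Re ((\<i> * V0 b) * cnj (w b) - (\<i> * V0 a) * cnj (w a))" by simp
    moreover have "Re ((\<i> * V0 b) * cnj (w b) - (\<i> * V0 a) * cnj (w a)) =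
                   cinner (\<i> * V0 b) (w b) - cinner (\<i> * V0 a) (w a)"
      by (simp add: cinner_def)
    ultimately show ?thesis by simp
  qed
  have eq: "1/2 * (LBINT x:{-R..R}. cinner (\<i> * (V0 x + w x)) (k x)) =
            1/2 * (integral {-R..R} r0 + (LBINT x:{-R..R}. rW x) + 2 * (LBINT x:{-R..R}. rX x) + Bd R)"
    if R: "R \<ge> 0" for R
  proof -
    have mR: "- R \<le> R" using R by simp
    have "(LBINT x:{-R..R}. cinner (\<i> * (V0 x + w x)) (k x)) =
          (LBINT x:{-R..R}. cinner (\<i> * (V0 x + w x)) (g0 x + h x))"
    proof (rule set_lebesgue_integral_cong_AE)
      show "(\<lambda>x. cinner (\<i> * (V0 x + w x)) (k x)) \<in> borel_measurable lborel" unfolding cinner_def by measurable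
      show "(\<lambda>x. cinner (\<i> * (V0 x + w x)) (g0 x + h x)) \<in> borel_measurable lborel" unfolding cinner_def by measurable
      show "AE x\<in>{-R..R} in lborel. cinner (\<i> * (V0 x + w x)) (k x) = cinner (\<i> * (V0 x + w x)) (g0 x + h x)"
        using AEk by eventually_elim simp
    qed simp
    also have "\<dots> = integral {-R..R} (\<lambda>x. cinner (\<i> * (V0 x + w x)) (g0 x + h x))"
      by (rule set_borel_integral_eq_integral(2)[OF rho_setint[OF wdV wdV]]) simp
    also have "\<dots> = integral {-R..R} (\<lambda>x. r0 x + rW x + rX x + rY x)"
      by (rule integral_cong) (simp add: r0_def rW_def rX_def rY_def cinner_def algebra_simps)
    also have "\<dots> = integral {-R..R} r0 + integral {-R..R} rW + integral {-R..R} rX + integral {-R..R} rY"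
      by (simp add: integral_add ri0 riW riX riY integrable_add)
    also have "integral {-R..R} rY = Bd R + integral {-R..R} rX"
      using parts[OF mR] by (simp add: Bd_def)
    also have "integral {-R..R} rW = (LBINT x:{-R..R}. rW x)"
      by (rule set_borel_integral_eq_integral(2)[symmetric], unfold rW_def, rule rho_setint[OF wdw wdw]) simp
    also have "integral {-R..R} rX = (LBINT x:{-R..R}. rX x)"
      by (rule set_borel_integral_eq_integral(2)[symmetric], unfold rX_def, rule rho_setint[OF wdw wd0]) simp
    finally show ?thesis by simp
  qed
  obtain A0 where A0: "((\<lambda>R. integral {-R..R} r0) \<longlongrightarrow> A0) at_top"
    using mom_exists[OF wd0 g0L2 eta l1 nl1 l2 nl2] unfolding r0_def[abs_def] by blast
  have iW: "integrable lborel rW" unfolding rW_def[abs_def] by (rule cinner_int[OF wL2 hL2])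
  have iX: "integrable lborel rX" unfolding rX_def[abs_def] by (rule cinner_int[OF wL2 g0L2])
  have tW: "((\<lambda>R. LBINT x:{-R..R}. rW x) \<longlongrightarrow> (LINT x|lborel. rW x)) at_top" by (rule lbint_tendsto_full[OF iW])
  have tX: "((\<lambda>R. LBINT x:{-R..R}. rX x) \<longlongrightarrow> (LINT x|lborel. rX x)) at_top" by (rule lbint_tendsto_full[OF iX])
  have tB: "(Bd \<longlongrightarrow> 0) at_top"
  proof -
    have l2': "((\<lambda>R. V0 (-R)) \<longlongrightarrow> l2) at_top"
      by (rule filterlim_compose[OF l2 filterlim_uminus_at_bot_at_top])
    have w2': "((\<lambda>R. w (-R)) \<longlongrightarrow> 0) at_top"
      by (rule filterlim_compose[OF H1_facts(3)[OF wH] filterlim_uminus_at_bot_at_top])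
    have "((\<lambda>R. Re (\<i> * V0 R * cnj (w R)) - Re (\<i> * V0 (-R) * cnj (w (-R))))
           \<longlongrightarrow> Re (\<i> * l1 * cnj 0) - Re (\<i> * l2 * cnj 0)) at_top"
      by (intro tendsto_intros l1 l2' w2' H1_facts(2)[OF wH])
    then show ?thesis by (simp add: Bd_def[abs_def] cinner_def)
  qed
  have "((\<lambda>R. 1/2 * (integral {-R..R} r0 + (LBINT x:{-R..R}. rW x) + 2 * (LBINT x:{-R..R}. rX x) + Bd R))
        \<longlongrightarrow> 1/2 * (A0 + (LINT x|lborel. rW x) + 2 * (LINT x|lborel. rX x) + 0)) at_top"
    by (intro tendsto_intros A0 tW tX tB)
  moreover have "eventually (\<lambda>R. 1/2 * (integral {-R..R} r0 + (LBINT x:{-R..R}. rW x) + 2 * (LBINT x:{-R..R}. rX x) + Bd R)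
     = 1/2 * (LBINT x:{-R..R}. cinner (\<i> * (V0 x + w x)) (k x))) at_top"
    unfolding eventually_at_top_linorder by (intro exI[of _ 0] allI impI) (rule eq[symmetric])
  ultimately have tV: "((\<lambda>R. 1/2 * (LBINT x:{-R..R}. cinner (\<i> * (V0 x + w x)) (k x)))
        \<longlongrightarrow> 1/2 * (A0 + (LINT x|lborel. rW x) + 2 * (LINT x|lborel. rX x) + 0)) at_top"
    by (rule Lim_transform_eventually)
  have mV: "momentum (\<lambda>x. V0 x + w x) = 1/2 * (A0 + (LINT x|lborel. rW x) + 2 * (LINT x|lborel. rX x) + 0)"
    unfolding momentum_def k_def[symmetric] by (rule tendsto_Lim[OF _ tV]) simp
  have e0: "(LBINT x:{-R..R}. cinner (\<i> * V0 x) (weak_deriv V0 x)) = integral {-R..R} r0" for R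
    unfolding r0_def[abs_def] g0_def[symmetric]
    by (rule set_borel_integral_eq_integral(2)[OF rho_setint[OF wd0 wd0 g0m]])
  have "((\<lambda>R. 1/2 * integral {-R..R} r0) \<longlongrightarrow> 1/2 * A0) at_top" by (intro tendsto_intros A0)
  then have "((\<lambda>R. 1/2 * (LBINT x:{-R..R}. cinner (\<i> * V0 x) (weak_deriv V0 x))) \<longlongrightarrow> 1/2 * A0) at_top"
    unfolding e0 .
  then have m0: "momentum V0 = 1/2 * A0"
    unfolding momentum_def by (rule tendsto_Lim[rotated]) simp
  have "momentum (\<lambda>x. V0 x + w x) = momentum V0 + 1/2 * (LINT x|lborel. rW x) + (LINT x|lborel. rX x)"
    using mV m0 by simp
  then show ?thesis using Z by (simp add: rW_def rX_def h_def g0_def)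
qed


end
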